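(* Let $d\geq 2$. Then $\mathcal{P}(z,\lambda)$, regarded as a function of both $z$ and $\lambda$, is irreducible: there are no $f_1,f_2$, each a Laurent polynomial in $z$ with coefficients polynomial in $\lambda$, neither of the form $Cz^a$ with $C\neq 0$ a constant and $a\in\mathbb{Z}^d$, such that $\mathcal{P}=f_1f_2$.
   Context: Fix positive integers $q_1,\dots,q_d$ with greatest common divisor $1$, $Q=q_1\cdots q_d$, $\Gamma=q_1\mathbb{Z}\oplus\cdots\oplus q_d\mathbb{Z}$, and a $\Gamma$-periodic $V:\mathbb{Z}^d\to\mathbb{C}$. The discrete Laplacian is $(\Delta u)(n)=\sum_{\|n'-n\|_1=1}u(n')$. Let $W=\{n\in\mathbb{Z}^d:0\le n_j\le q_j-1\}$. For $z\in(\mathbb{C}\setminus\{0\})^d$, the space of $u:\mathbb{Z}^d\to\mathbb{C}$ with $u(n+q_je_j)=z_ju(n)$ for all $j,n$ is identified with $\mathbb{C}^W$ by restriction; $\mathcal{D}(z)$ is the $Q\times Q$ matrix of $-\Delta+V$ on this space and $\mathcal{P}(z,\lambda)=\det(\mathcal{D}(z)-\lambda I)$. Here $z^a=z_1^{a_1}\cdots z_d^{a_d}$. *)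

theory Defs
  imports "HOL-Analysis.Analysis" "HOL-Combinatorics.Permutations"
begin

text \<open>Lattice points of Z^d are functions 'd => int, 'd a finite index type with CARD('d) = d.
  The period vector is q :: 'd => nat.\<close>

definition zpow :: "('d::finite \<Rightarrow> complex) \<Rightarrow> ('d \<Rightarrow> int) \<Rightarrow> complex" where
  "zpow z a = (\<Prod>j\<in>UNIV. z j powi a j)"

definition Wdom :: "('d::finite \<Rightarrow> nat) \<Rightarrow> ('d \<Rightarrow> int) set" where
  "Wdom q = {n. \<forall>j. 0 \<le> n j \<and> n j < int (q j)}"

definition red :: "('d::finite \<Rightarrow> nat) \<Rightarrow> ('d \<Rightarrow> int) \<Rightarrow> ('d \<Rightarrow> int)" where
  "red q n = (\<lambda>j. n j mod int (q j))"

definition quo :: "('d::finite \<Rightarrow> nat) \<Rightarrow> ('d \<Rightarrow> int) \<Rightarrow> ('d \<Rightarrow> int)" where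
  "quo q n = (\<lambda>j. n j div int (q j))"

definition neighbors :: "('d::finite \<Rightarrow> int) \<Rightarrow> ('d \<Rightarrow> int) set" where
  "neighbors n = {n'. (\<Sum>j\<in>UNIV. \<bar>n' j - n j\<bar>) = 1}"

text \<open>Matrix of -Delta + V on the Floquet space {u. u(n + q_j e_j) = z_j u(n)}, identified with C^W:
  a function u with this property satisfies u n = z^(quo q n) * u (red q n).\<close>
definition Dmat :: "('d::finite \<Rightarrow> nat) \<Rightarrow> (('d \<Rightarrow> int) \<Rightarrow> complex) \<Rightarrow> ('d \<Rightarrow> complex)
    \<Rightarrow> ('d \<Rightarrow> int) \<Rightarrow> ('d \<Rightarrow> int) \<Rightarrow> complex" where
  "Dmat q V z w w' =
     (if w = w' then V w else 0)
     - (\<Sum>n'\<in>neighbors w. if red q n' = w' then zpow z (quo q n') else 0)"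

definition detS :: "'i set \<Rightarrow> ('i \<Rightarrow> 'i \<Rightarrow> complex) \<Rightarrow> complex" where
  "detS S M = (\<Sum>p\<in>{p. p permutes S}. of_int (sign p) * (\<Prod>i\<in>S. M i (p i)))"

definition charP :: "('d::finite \<Rightarrow> nat) \<Rightarrow> (('d \<Rightarrow> int) \<Rightarrow> complex) \<Rightarrow> ('d \<Rightarrow> complex)
    \<Rightarrow> complex \<Rightarrow> complex" where
  "charP q V z lam = detS (Wdom q) (\<lambda>w w'. Dmat q V z w w' - (if w = w' then lam else 0))"

text \<open>A Laurent polynomial in z with coefficients polynomial in lambda is given by a finitely
  supported coefficient function c :: ('d => int) * nat => complex, c(a,k) being the coefficient
  of z^a lambda^k.\<close>
definition lp_eval :: "(('d::finite \<Rightarrow> int) \<times> nat \<Rightarrow> complex) \<Rightarrow> ('d \<Rightarrow> complex) \<Rightarrow> complex \<Rightarrow> complex" where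
  "lp_eval c z lam = (\<Sum>x\<in>{x. c x \<noteq> 0}. c x * zpow z (fst x) * lam ^ snd x)"

definition is_lp :: "(('d::finite \<Rightarrow> int) \<times> nat \<Rightarrow> complex) \<Rightarrow> bool" where
  "is_lp c \<longleftrightarrow> finite {x. c x \<noteq> 0}"

definition is_monomial :: "(('d::finite \<Rightarrow> int) \<times> nat \<Rightarrow> complex) \<Rightarrow> bool" where
  "is_monomial c \<longleftrightarrow> (\<exists>C a. C \<noteq> 0 \<and> c = (\<lambda>x. if x = (a, 0) then C else 0))"

end

theory Submission
  imports Defs "Jordan_Normal_Form.Determinant" "HOL-Library.Function_Algebras"
begin


lemma detS_perm_bij:
  assumes bh: "bij_betw h {0..<n} S"
  shows "bij_betw (map_permutation {0..<n} h) {p. p permutes {0..<n}} {p. p permutes S}"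
proof -
  define h' where "h' = inv_into {0..<n} h"
  have bh': "bij_betw h' S {0..<n}" unfolding h'_def using bh by (rule bij_betw_inv_into)
  have hh': "\<And>x. x \<in> S \<Longrightarrow> h (h' x) = x" unfolding h'_def using bh
    by (meson bij_betw_inv_into_right)
  have h'h: "\<And>x. x \<in> {0..<n} \<Longrightarrow> h' (h x) = x" unfolding h'_def using bh
    by (meson bij_betw_inv_into_left)
  show ?thesis
  proof (rule bij_betw_byWitness[where f' = "map_permutation S h'"])
    show "\<forall>a\<in>{p. p permutes {0..<n}}. map_permutation S h' (map_permutation {0..<n} h a) = a"
      using map_permutation_compose_inv[OF bh _ h'h] by auto
    show "\<forall>a'\<in>{p. p permutes S}. map_permutation {0..<n} h (map_permutation S h' a') = a'"
      using map_permutation_compose_inv[OF bh' _ hh'] by auto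
    show "map_permutation {0..<n} h ` {p. p permutes {0..<n}} \<subseteq> {p. p permutes S}"
      using map_permutation_permutes[OF bh] by auto
    show "map_permutation S h' ` {p. p permutes S} \<subseteq> {p. p permutes {0..<n}}"
      using map_permutation_permutes[OF bh'] by auto
  qed
qed

lemma detS_as_det:
  assumes bh: "bij_betw h {0..<n} S"
  shows "detS S M = det (mat n n (\<lambda>(i,j). M (h i) (h j)))"
proof -
  have inj: "inj_on h {0..<n}" using bh bij_betw_def by blast
  have fin: "finite {0..<n::nat}" by simp
  have "det (mat n n (\<lambda>(i,j). M (h i) (h j))) =
     (\<Sum>p\<in>{p. p permutes {0..<n}}. of_int (sign p) * (\<Prod>i=0..<n. M (h i) (h (p i))))"
    by (subst det_def'[of _ n]) (auto intro!: sum.cong prod.cong simp: permutes_in_image)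
  also have "\<dots> = (\<Sum>p\<in>{p. p permutes {0..<n}}. of_int (sign (map_permutation {0..<n} h p)) *
          (\<Prod>i\<in>S. M i (map_permutation {0..<n} h p i)))"
  proof (rule sum.cong[OF refl])
    fix p assume "p \<in> {p. p permutes {0..<n}}"
    hence p: "p permutes {0..<n}" by simp
    have "(\<Prod>i\<in>S. M i (map_permutation {0..<n} h p i)) =
          (\<Prod>i\<in>{0..<n}. M (h i) (map_permutation {0..<n} h p (h i)))"
      using prod.reindex_bij_betw[OF bh, of "\<lambda>i. M i (map_permutation {0..<n} h p i)"] by simp
    also have "\<dots> = (\<Prod>i=0..<n. M (h i) (h (p i)))"
      by (rule prod.cong[OF refl]) (simp add: map_permutation_apply[OF inj])
    finally show "of_int (sign p) * (\<Prod>i=0..<n. M (h i) (h (p i))) =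
       of_int (sign (map_permutation {0..<n} h p)) * (\<Prod>i\<in>S. M i (map_permutation {0..<n} h p i))"
      using sign_map_permutation[OF inj p fin] by simp
  qed
  also have "\<dots> = detS S M" unfolding detS_def
    by (rule sum.reindex_bij_betw[OF detS_perm_bij[OF bh], of "\<lambda>p. of_int (sign p) * (\<Prod>i\<in>S. M i (p i))"])
  finally show ?thesis by simp
qed

lemma detS_kernel_zero:
  assumes fin: "finite S" and i0: "i0 \<in> S" and v0: "v i0 \<noteq> 0"
    and ker: "\<forall>i\<in>S. (\<Sum>j\<in>S. M i j * v j) = 0"
  shows "detS S M = 0"
proof -
  define n where "n = card S"
  obtain h where bh: "bij_betw h {0..<n} S" unfolding n_def using ex_bij_betw_nat_finite[OF fin] by blast
  define B where "B = mat n n (\<lambda>(i,j). M (h i) (h j))"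
  define u where "u = vec n (\<lambda>j. v (h j))"
  have B: "B \<in> carrier_mat n n" unfolding B_def by simp
  obtain k where k: "k < n" "h k = i0" using bh i0 unfolding bij_betw_def by force
  have u0: "u \<noteq> 0\<^sub>v n"
  proof
    assume "u = 0\<^sub>v n"
    hence "u $ k = 0" using k by simp
    thus False using k v0 unfolding u_def by simp
  qed
  have Bu: "B *\<^sub>v u = 0\<^sub>v n"
  proof (rule eq_vecI)
    show "dim_vec (B *\<^sub>v u) = dim_vec (0\<^sub>v n)" using B by simp
    fix i assume "i < dim_vec (0\<^sub>v n)"
    hence i: "i < n" by simp
    have "(B *\<^sub>v u) $ i = (\<Sum>j=0..<n. M (h i) (h j) * v (h j))"
      using i unfolding B_def u_def by (simp add: scalar_prod_def)
    also have "\<dots> = (\<Sum>j\<in>S. M (h i) j * v j)"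
      using sum.reindex_bij_betw[OF bh, of "\<lambda>j. M (h i) j * v j"] by simp
    also have "\<dots> = 0" using ker i bh unfolding bij_betw_def by auto
    finally show "(B *\<^sub>v u) $ i = 0\<^sub>v n $ i" using i by simp
  qed
  have uc: "u \<in> carrier_vec n" unfolding u_def by simp
  have "det B = 0" using det_0_iff_vec_prod_zero[OF B] u0 Bu uc by blast
  thus ?thesis using detS_as_det[OF bh] unfolding B_def by simp
qed

lemma detS_conj:
  assumes fin: "finite S" and g: "\<forall>i\<in>S. g i \<noteq> (0::complex)"
  shows "detS S (\<lambda>i j. g i * M i j / g j) = detS S M"
  unfolding detS_def
proof (rule sum.cong[OF refl])
  fix p assume "p \<in> {p. p permutes S}"
  hence p: "p permutes S" by simp
  have pg: "(\<Prod>i\<in>S. g (p i)) = (\<Prod>i\<in>S. g i)"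
    using prod.permute[OF p, of g] by (simp add: o_def)
  have nz: "(\<Prod>i\<in>S. g i) \<noteq> 0" using g fin by simp
  have "(\<Prod>i\<in>S. g i * M i (p i) / g (p i)) = (\<Prod>i\<in>S. g i) * (\<Prod>i\<in>S. M i (p i)) / (\<Prod>i\<in>S. g (p i))"
    by (simp add: prod.distrib prod_dividef)
  also have "\<dots> = (\<Prod>i\<in>S. M i (p i))" using pg nz by simp
  finally show "of_int (sign p) * (\<Prod>i\<in>S. g i * M i (p i) / g (p i)) = of_int (sign p) * (\<Prod>i\<in>S. M i (p i))"
    by simp
qed

lemma detS_scale:
  "detS S (\<lambda>i j. M i j / c) = detS S M / c ^ card S"
  unfolding detS_def
  by (simp add: sum_divide_distrib prod_dividef)

lemma detS_tendsto:
  assumes "\<And>i j. ((\<lambda>t. M t i j) \<longlongrightarrow> L i j) F"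
  shows "((\<lambda>t. detS S (M t)) \<longlongrightarrow> detS S L) F"
  unfolding detS_def by (intro tendsto_intros assms)

lemma detS_diag:
  assumes fin: "finite S"
  shows "detS S (\<lambda>i j. if i = j then c i else 0) = (\<Prod>i\<in>S. c i)"
proof -
  have z: "(\<Prod>i\<in>S. (if i = p i then c i else 0)) = 0" if "p permutes S" "p \<noteq> id" for p
  proof -
    obtain i where "p i \<noteq> i" using \<open>p \<noteq> id\<close> by (auto simp: fun_eq_iff)
    hence "i \<in> S" using that(1) permutes_not_in by metis
    thus ?thesis using fin \<open>p i \<noteq> i\<close> by (intro prod_zero[OF fin] bexI[of _ i]) auto
  qed
  have "detS S (\<lambda>i j. if i = j then c i else 0) =
     (\<Sum>p\<in>{p. p permutes S}. if p = id then (\<Prod>i\<in>S. c i) else 0)"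
    unfolding detS_def
    by (rule sum.cong[OF refl]) (auto simp: z)
  also have "\<dots> = (\<Prod>i\<in>S. c i)"
    using fin by (simp add: permutes_id finite_permutations)
  finally show ?thesis .
qed


definition lsupp :: "('a \<Rightarrow> complex) \<Rightarrow> 'a set" where "lsupp f = {x. f x \<noteq> 0}"
definition wdot :: "('d::finite \<Rightarrow> int) \<Rightarrow> ('d \<Rightarrow> int) \<Rightarrow> int" where
  "wdot w a = (\<Sum>j\<in>UNIV. w j * a j)"
definition wt :: "('d::finite \<Rightarrow> int) \<Rightarrow> int \<Rightarrow> ('d \<Rightarrow> int) \<times> nat \<Rightarrow> int" where
  "wt w L s = wdot w (fst s) + L * int (snd s)"
definition emax :: "(('d::finite \<Rightarrow> int) \<times> nat \<Rightarrow> complex) \<Rightarrow> ('d \<Rightarrow> int) \<Rightarrow> int \<Rightarrow> int" where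
  "emax f w L = Max (wt w L ` lsupp f)"
definition topc :: "(('d::finite \<Rightarrow> int) \<times> nat \<Rightarrow> complex) \<Rightarrow> ('d \<Rightarrow> int) \<Rightarrow> int \<Rightarrow> ('d \<Rightarrow> int) \<times> nat \<Rightarrow> complex" where
  "topc f w L = (\<lambda>s. if wt w L s = emax f w L then f s else 0)"
definition cz :: "('d::finite \<Rightarrow> int) \<Rightarrow> ('d \<Rightarrow> complex) \<Rightarrow> real \<Rightarrow> 'd \<Rightarrow> complex" where
  "cz w x t = (\<lambda>j. complex_of_real t powi w j * x j)"
definition cl :: "int \<Rightarrow> complex \<Rightarrow> real \<Rightarrow> complex" where
  "cl L \<mu> t = complex_of_real t powi L * \<mu>"

lemma lp_eval_superset:
  assumes "finite S" "lsupp c \<subseteq> S"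
  shows "lp_eval c z lam = (\<Sum>s\<in>S. c s * zpow z (fst s) * lam ^ snd s)"
  unfolding lp_eval_def
  by (rule sum.mono_neutral_left) (use assms in \<open>auto simp: lsupp_def\<close>)

lemma prod_powi_real:
  fixes t :: "'a::field"
  assumes "t \<noteq> 0" "finite A"
  shows "(\<Prod>j\<in>A. t powi e j) = t powi (\<Sum>j\<in>A. e j)"
  using assms(2) by (induction A rule: finite_induct) (auto simp: power_int_add assms(1))

lemma zpow_cz:
  assumes "t \<noteq> 0"
  shows "zpow (cz w x t) a = complex_of_real t powi wdot w a * zpow x a"
proof -
  have "zpow (cz w x t) a = (\<Prod>j\<in>UNIV. complex_of_real t powi (w j * a j) * x j powi a j)"
    unfolding zpow_def cz_def
    by (rule prod.cong[OF refl]) (simp add: power_int_mult_distrib power_int_mult)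
  also have "\<dots> = (\<Prod>j\<in>UNIV. complex_of_real t powi (w j * a j)) * zpow x a"
    by (simp add: prod.distrib zpow_def)
  also have "\<dots> = complex_of_real t powi wdot w a * zpow x a"
    using prod_powi_real[of "complex_of_real t" UNIV "\<lambda>j. w j * a j"] assms by (simp add: wdot_def)
  finally show ?thesis .
qed

lemma cl_pow:
  "cl L \<mu> t ^ k = complex_of_real t powi (L * int k) * \<mu> ^ k"
  unfolding cl_def power_mult_distrib by (simp add: power_int_mult)

lemma lp_eval_curve:
  assumes "t \<noteq> 0" "is_lp c"
  shows "lp_eval c (cz w x t) (cl L \<mu> t) =
     (\<Sum>s\<in>lsupp c. c s * zpow x (fst s) * \<mu> ^ snd s * complex_of_real t powi wt w L s)"
  unfolding lp_eval_def lsupp_def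
proof (rule sum.cong[OF refl])
  fix s
  show "c s * zpow (cz w x t) (fst s) * cl L \<mu> t ^ snd s =
         c s * zpow x (fst s) * \<mu> ^ snd s * complex_of_real t powi wt w L s"
    using assms(1) by (simp add: zpow_cz cl_pow wt_def power_int_add)
qed

lemma powi_neg_tendsto:
  assumes "n < 0"
  shows "((\<lambda>t::real. t powi n) \<longlongrightarrow> 0) at_top"
proof -
  have "((\<lambda>t::real. inverse t ^ nat (-n)) \<longlongrightarrow> 0 ^ nat (-n)) at_top"
    by (intro tendsto_intros tendsto_inverse_0_at_top filterlim_ident)
  moreover have "(0::real) ^ nat (-n) = 0" using assms by simp
  ultimately show ?thesis using assms by (simp add: power_int_def)
qed

lemma powi_cneg_tendsto:
  assumes "n < 0"
  shows "((\<lambda>t::real. complex_of_real t powi n) \<longlongrightarrow> 0) at_top"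
  using tendsto_of_real[OF powi_neg_tendsto[OF assms], where 'a=complex] by (simp add: of_real_power_int)

lemma topc_supp: "lsupp (topc f w L) \<subseteq> lsupp f"
  unfolding lsupp_def topc_def by auto

lemma top_limit:
  assumes lp: "is_lp c" and ne: "lsupp c \<noteq> {}"
  shows "((\<lambda>t. lp_eval c (cz w x t) (cl L \<mu> t) / complex_of_real t powi emax c w L)
          \<longlongrightarrow> lp_eval (topc c w L) x \<mu>) at_top"
proof -
  have fin: "finite (lsupp c)" using lp unfolding is_lp_def lsupp_def .
  define E where "E = emax c w L"
  have le: "wt w L s \<le> E" if "s \<in> lsupp c" for s
    unfolding E_def emax_def using fin that by (intro Max_ge) auto
  have eq: "lp_eval c (cz w x t) (cl L \<mu> t) / complex_of_real t powi E =
     (\<Sum>s\<in>lsupp c. c s * zpow x (fst s) * \<mu> ^ snd s * complex_of_real t powi (wt w L s - E))"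
    if "t > 0" for t
  proof -
    have "lp_eval c (cz w x t) (cl L \<mu> t) / complex_of_real t powi E =
      (\<Sum>s\<in>lsupp c. c s * zpow x (fst s) * \<mu> ^ snd s * complex_of_real t powi wt w L s / complex_of_real t powi E)"
      using that by (simp add: lp_eval_curve[OF _ lp] sum_divide_distrib)
    also have "\<dots> = (\<Sum>s\<in>lsupp c. c s * zpow x (fst s) * \<mu> ^ snd s * complex_of_real t powi (wt w L s - E))"
      using that by (intro sum.cong refl) (simp add: power_int_diff)
    finally show ?thesis .
  qed
  have lim: "((\<lambda>t. \<Sum>s\<in>lsupp c. c s * zpow x (fst s) * \<mu> ^ snd s * complex_of_real t powi (wt w L s - E))
      \<longlongrightarrow> (\<Sum>s\<in>lsupp c. if wt w L s = E then c s * zpow x (fst s) * \<mu> ^ snd s else 0)) at_top"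
  proof (intro tendsto_sum)
    fix s assume s: "s \<in> lsupp c"
    show "((\<lambda>t. c s * zpow x (fst s) * \<mu> ^ snd s * complex_of_real t powi (wt w L s - E))
       \<longlongrightarrow> (if wt w L s = E then c s * zpow x (fst s) * \<mu> ^ snd s else 0)) at_top"
    proof (cases "wt w L s = E")
      case True thus ?thesis by simp
    next
      case False
      hence "wt w L s - E < 0" using le[OF s] by simp
      from tendsto_mult[OF tendsto_const powi_cneg_tendsto[OF this], of "c s * zpow x (fst s) * \<mu> ^ snd s"] False
      show ?thesis by simp
    qed
  qed
  have "(\<Sum>s\<in>lsupp c. if wt w L s = E then c s * zpow x (fst s) * \<mu> ^ snd s else 0) =
        lp_eval (topc c w L) x \<mu>"
    by (subst lp_eval_superset[OF fin topc_supp]) (auto simp: topc_def E_def intro!: sum.cong)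
  with lim have "((\<lambda>t. \<Sum>s\<in>lsupp c. c s * zpow x (fst s) * \<mu> ^ snd s * complex_of_real t powi (wt w L s - E))
      \<longlongrightarrow> lp_eval (topc c w L) x \<mu>) at_top" by simp
  thus ?thesis unfolding E_def[symmetric]
    by (rule Lim_transform_eventually) (rule eventually_mono[OF eventually_gt_at_top[of 0]], simp add: eq)
qed


lemma wdot_diff: "wdot w (a - b) = wdot w a - wdot w b"
  unfolding wdot_def by (simp add: algebra_simps sum_subtractf)

lemma wdot_add: "wdot w (a + b) = wdot w a + wdot w b"
  unfolding wdot_def by (simp add: algebra_simps sum.distrib)

lemma wdot_neg: "wdot (- w) a = - wdot w a"
  unfolding wdot_def by (simp add: sum_negf)

lemma sep_exists:
  "finite D \<Longrightarrow> 0 \<notin> D \<Longrightarrow> \<exists>w::'d::finite \<Rightarrow> int. \<forall>v\<in>D. wdot w v \<noteq> 0"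
proof (induction D rule: finite_induct)
  case empty thus ?case by simp
next
  case (insert v D)
  then obtain w where w: "\<forall>u\<in>D. wdot w u \<noteq> 0" by auto
  have "v \<noteq> 0" using insert by auto
  then obtain j where j: "v j \<noteq> 0" by (auto simp: fun_eq_iff)
  define M where "M = 1 + Max ((\<lambda>u. \<bar>u j\<bar>) ` insert v D)"
  have M: "\<bar>u j\<bar> < M" if "u \<in> insert v D" for u
  proof -
    have "\<bar>u j\<bar> \<le> Max ((\<lambda>u. \<bar>u j\<bar>) ` insert v D)" by (rule Max_ge) (use insert(1) that in auto)
    thus ?thesis unfolding M_def by simp
  qed
  define w' where "w' = (\<lambda>i. M * w i + (if i = j then 1 else 0))"
  have wd: "wdot w' u = M * wdot w u + u j" for u
  proof -
    have "(\<Sum>i\<in>UNIV. u i * (if i = j then 1 else 0)) = u j"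
      by (simp add: mult.commute[of "u _"] if_distrib cong: if_cong)
    thus ?thesis unfolding w'_def wdot_def by (simp add: algebra_simps sum.distrib sum_distrib_left)
  qed
  have ne: "wdot w' u \<noteq> 0" if u: "u \<in> insert v D" "wdot w u \<noteq> 0" for u
  proof
    assume "wdot w' u = 0"
    hence "M * wdot w u = - u j" using wd by simp
    hence "\<bar>M * wdot w u\<bar> < M" using M[OF u(1)] by simp
    moreover have "\<bar>M * wdot w u\<bar> \<ge> M"
    proof -
      have M0: "M > 0" using M[OF u(1)] by linarith
      have "\<bar>wdot w u\<bar> \<ge> 1" using u(2) by linarith
      hence "M * \<bar>wdot w u\<bar> \<ge> M * 1" using M0 by (intro mult_left_mono) auto
      thus ?thesis using M0 by (simp add: abs_mult)
    qed
    ultimately show False by simp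
  qed
  show ?case
  proof (intro exI[of _ w'] ballI)
    fix u assume u: "u \<in> insert v D"
    show "wdot w' u \<noteq> 0"
    proof (cases "wdot w u = 0")
      case True
      hence "u = v" using u w by auto
      thus ?thesis using True wd j by simp
    next
      case False thus ?thesis using ne u by simp
    qed
  qed
qed

lemma top_single:
  assumes lp: "is_lp f" and ne: "lsupp f \<noteq> {}" and inj: "inj_on (wt w L) (lsupp f)"
  shows "\<exists>s0\<in>lsupp f. wt w L s0 = emax f w L \<and> lsupp (topc f w L) = {s0} \<and>
            (\<forall>s\<in>lsupp f. s \<noteq> s0 \<longrightarrow> wt w L s < emax f w L)"
proof -
  have fin: "finite (lsupp f)" using lp unfolding is_lp_def lsupp_def .
  have "emax f w L \<in> wt w L ` lsupp f" unfolding emax_def using fin ne by (intro Max_in) auto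
  then obtain s0 where s0: "s0 \<in> lsupp f" "wt w L s0 = emax f w L" by auto
  have le: "wt w L s \<le> emax f w L" if "s \<in> lsupp f" for s
    unfolding emax_def using fin that by (intro Max_ge) auto
  have lt: "wt w L s < emax f w L" if "s \<in> lsupp f" "s \<noteq> s0" for s
  proof -
    have "wt w L s \<noteq> wt w L s0" using inj that s0(1) unfolding inj_on_def by blast
    thus ?thesis using le[OF that(1)] s0(2) by linarith
  qed
  have "lsupp (topc f w L) = {s0}"
  proof (rule Set.set_eqI)
    fix s
    show "s \<in> lsupp (topc f w L) \<longleftrightarrow> s \<in> {s0}"
    proof
      assume "s \<in> lsupp (topc f w L)"
      hence s: "f s \<noteq> 0" "wt w L s = emax f w L" unfolding lsupp_def topc_def by (auto split: if_splits)
      show "s \<in> {s0}"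
      proof (rule ccontr)
        assume "s \<notin> {s0}"
        hence "wt w L s < emax f w L" using lt[of s] s(1) unfolding lsupp_def by simp
        thus False using s(2) by simp
      qed
    next
      assume "s \<in> {s0}"
      thus "s \<in> lsupp (topc f w L)" using s0 unfolding lsupp_def topc_def by simp
    qed
  qed
  thus ?thesis using s0 lt by blast
qed
lemma lp_eval_single:
  assumes "lsupp c = {s0}"
  shows "lp_eval c x \<mu> = c s0 * zpow x (fst s0) * \<mu> ^ snd s0"
  using lp_eval_superset[of "{s0}" c x \<mu>] assms by simp

lemma zpow_one: "zpow (\<lambda>_. 1) a = 1"
  unfolding zpow_def by simp

lemma tendsto_ev_nonzero:
  assumes "(g \<longlongrightarrow> a) at_top" "a \<noteq> (0::complex)"
  shows "eventually (\<lambda>t. g t \<noteq> 0) at_top"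
  using tendsto_imp_eventually_ne[OF assms] .

lemma common_nonzero:
  fixes f g :: "('d::finite \<Rightarrow> int) \<times> nat \<Rightarrow> complex"
  assumes lf: "is_lp f" and lg: "is_lp g" and nf: "lsupp f \<noteq> {}" and ng: "lsupp g \<noteq> {}"
  shows "\<exists>x \<mu>. (\<forall>j. x j \<noteq> 0) \<and> lp_eval f x \<mu> \<noteq> 0 \<and> lp_eval g x \<mu> \<noteq> 0"
proof -
  define S where "S = lsupp f \<union> lsupp g"
  have finS: "finite S" using lf lg unfolding S_def is_lp_def lsupp_def by auto
  define A where "A = fst ` S"
  have finA: "finite A" unfolding A_def using finS by simp
  define D where "D = (\<lambda>(a,b). a - b) ` {(a,b). a \<in> A \<and> b \<in> A \<and> a \<noteq> b}"
  have finD: "finite D" unfolding D_def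
    by (rule finite_imageI, rule finite_subset[of _ "A \<times> A"]) (use finA in auto)
  have "0 \<notin> D" unfolding D_def by auto
  then obtain w :: "'d \<Rightarrow> int" where w: "\<forall>v\<in>D. wdot w v \<noteq> 0" using sep_exists[OF finD] by blast
  have winj: "wdot w a = wdot w b \<Longrightarrow> a \<in> A \<Longrightarrow> b \<in> A \<Longrightarrow> a = b" for a b
  proof (rule ccontr)
    assume "wdot w a = wdot w b" "a \<in> A" "b \<in> A" "a \<noteq> b"
    hence "a - b \<in> D" unfolding D_def by auto
    thus False using w \<open>wdot w a = wdot w b\<close> by (auto simp: wdot_diff)
  qed
  define M0 where "M0 = Max (insert 0 ((\<lambda>a. \<bar>wdot w a\<bar>) ` A))"
  have M0: "\<bar>wdot w a\<bar> \<le> M0" if "a \<in> A" for a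
    unfolding M0_def using finA that by (intro Max_ge) auto
  define L where "L = 2 * M0 + 1"
  have injS: "inj_on (wt w L) S"
  proof (rule inj_onI)
    fix s s' assume s: "s \<in> S" "s' \<in> S" "wt w L s = wt w L s'"
    obtain a k where sa: "s = (a,k)" by fastforce
    obtain a' k' where sa': "s' = (a',k')" by fastforce
    have aA: "a \<in> A" "a' \<in> A" using s sa sa' unfolding A_def by force+
    have eq: "L * (int k - int k') = wdot w a' - wdot w a"
      using s(3) unfolding sa sa' wt_def by (simp add: algebra_simps)
    have "\<bar>wdot w a' - wdot w a\<bar> < L" using M0[OF aA(1)] M0[OF aA(2)] unfolding L_def by simp
    hence "k = k'"
    proof -
      have "L > 0" using M0[OF aA(1)] unfolding L_def by simp
      assume a: "\<bar>wdot w a' - wdot w a\<bar> < L"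
      show "k = k'"
      proof (rule ccontr)
        assume "k \<noteq> k'"
        hence "\<bar>int k - int k'\<bar> \<ge> 1" by simp
        hence "\<bar>L * (int k - int k')\<bar> \<ge> L" using \<open>L > 0\<close>
          by (simp add: abs_mult)
        thus False using eq a by simp
      qed
    qed
    hence "wdot w a = wdot w a'" using eq by simp
    hence "a = a'" using winj aA by blast
    thus "s = s'" using sa sa' \<open>k = k'\<close> by simp
  qed
  have ev: "eventually (\<lambda>t. lp_eval c (cz w (\<lambda>_. 1) t) (cl L 1 t) \<noteq> 0) at_top"
    if lc: "is_lp c" and nc: "lsupp c \<noteq> {}" and sub: "lsupp c \<subseteq> S" for c
  proof -
    have inj: "inj_on (wt w L) (lsupp c)" using inj_on_subset[OF injS sub] .
    obtain s0 where s0: "s0 \<in> lsupp c" "lsupp (topc c w L) = {s0}" "wt w L s0 = emax c w L"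
      using top_single[OF lc nc inj] by blast
    have val: "lp_eval (topc c w L) (\<lambda>_. 1) 1 = c s0"
      using lp_eval_single[OF s0(2)] s0(3) by (simp add: zpow_one topc_def)
    have "c s0 \<noteq> 0" using s0(1) unfolding lsupp_def by simp
    hence "eventually (\<lambda>t. lp_eval c (cz w (\<lambda>_. 1) t) (cl L 1 t) / complex_of_real t powi emax c w L \<noteq> 0) at_top"
      using tendsto_ev_nonzero[OF top_limit[OF lc nc, of w "\<lambda>_. 1" L 1]] val by simp
    thus ?thesis by (rule eventually_mono) auto
  qed
  have sf: "lsupp f \<subseteq> S" and sg: "lsupp g \<subseteq> S" unfolding S_def by auto
  have "eventually (\<lambda>t. t > 0 \<and> (lp_eval f (cz w (\<lambda>_. 1) t) (cl L 1 t) \<noteq> 0 \<and>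
            lp_eval g (cz w (\<lambda>_. 1) t) (cl L 1 t) \<noteq> 0)) at_top"
    by (rule eventually_conj[OF eventually_gt_at_top[of 0] eventually_conj[OF ev[OF lf nf sf] ev[OF lg ng sg]]])
  then obtain N where N: "\<forall>t\<ge>N. t > 0 \<and> (lp_eval f (cz w (\<lambda>_. 1) t) (cl L 1 t) \<noteq> 0 \<and>
            lp_eval g (cz w (\<lambda>_. 1) t) (cl L 1 t) \<noteq> 0)"
    unfolding eventually_at_top_linorder by blast
  define t where "t = N"
  have t: "t > 0" "lp_eval f (cz w (\<lambda>_. 1) t) (cl L 1 t) \<noteq> 0"
     "lp_eval g (cz w (\<lambda>_. 1) t) (cl L 1 t) \<noteq> 0" using N unfolding t_def by auto
  have nz: "\<forall>j. cz w (\<lambda>_. 1) t j \<noteq> 0" using t(1) unfolding cz_def by simp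
  show ?thesis
    by (rule exI[of _ "cz w (\<lambda>_. 1) t"], rule exI[of _ "cl L 1 t"]) (use nz t in simp)
qed

lemma powi_exp_zero:
  assumes g: "(g \<longlongrightarrow> a) at_top" and h: "((\<lambda>t. g t * complex_of_real t powi n) \<longlongrightarrow> b) at_top"
    and a: "a \<noteq> 0" and b: "b \<noteq> 0"
  shows "n = 0"
proof (rule ccontr)
  assume "n \<noteq> 0"
  show False
  proof (cases "n < 0")
    case True
    have "((\<lambda>t. g t * complex_of_real t powi n) \<longlongrightarrow> a * 0) at_top"
      by (intro tendsto_mult g powi_cneg_tendsto True)
    with h b show False using tendsto_unique[OF trivial_limit_at_top_linorder] by force
  next
    case False
    hence "-n < 0" using \<open>n \<noteq> 0\<close> by simp
    have "((\<lambda>t. (g t * complex_of_real t powi n) * complex_of_real t powi (-n)) \<longlongrightarrow> b * 0) at_top"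
      by (intro tendsto_mult h powi_cneg_tendsto \<open>-n < 0\<close>)
    moreover have "eventually (\<lambda>t. (g t * complex_of_real t powi n) * complex_of_real t powi (-n) = g t) at_top"
      using eventually_gt_at_top[of 0]
      by (rule eventually_mono) (simp add: power_int_minus field_simps)
    ultimately have "(g \<longlongrightarrow> b * 0) at_top" using Lim_transform_eventually by blast
    with g a show False using tendsto_unique[OF trivial_limit_at_top_linorder] by force
  qed
qed


definition absn :: "('d::finite \<Rightarrow> int) \<Rightarrow> int" where "absn a = (\<Sum>j\<in>UNIV. a j)"

lemma Wdom_PiE: "Wdom q = Pi\<^sub>E UNIV (\<lambda>j. {0..<int (q j)})"
  unfolding Wdom_def by (auto simp: PiE_def extensional_def Pi_def)

lemma finite_Wdom: "finite (Wdom (q::'d::finite \<Rightarrow> nat))"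
  unfolding Wdom_PiE by (intro finite_PiE) auto

lemma nb_le:
  assumes "n' \<in> neighbors w"
  shows "\<bar>n' j - w j\<bar> \<le> 1"
proof -
  have "\<bar>n' j - w j\<bar> \<le> (\<Sum>i\<in>UNIV. \<bar>n' i - w i\<bar>)"
    by (rule member_le_sum) auto
  thus ?thesis using assms unfolding neighbors_def by simp
qed

lemma finite_neighbors: "finite (neighbors (w::'d::finite \<Rightarrow> int))"
proof (rule finite_subset)
  show "neighbors w \<subseteq> Pi\<^sub>E UNIV (\<lambda>j. {w j - 1..w j + 1})"
  proof
    fix n' assume "n' \<in> neighbors w"
    hence "\<bar>n' j - w j\<bar> \<le> 1" for j by (rule nb_le)
    hence "n' j \<in> {w j - 1..w j + 1}" for j using abs_le_iff[of "n' j - w j" 1] by auto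
    thus "n' \<in> Pi\<^sub>E UNIV (\<lambda>j. {w j - 1..w j + 1})" by (simp add: PiE_iff)
  qed
  show "finite (Pi\<^sub>E UNIV (\<lambda>j. {w j - 1..w j + 1}))" by (intro finite_PiE) auto
qed

lemma absn_diff: "absn a - absn b = (\<Sum>j\<in>UNIV. a j - b j)"
  unfolding absn_def by (simp add: sum_subtractf)

lemma nb_sum_le:
  assumes "n' \<in> neighbors w"
  shows "absn n' - absn w \<le> 1"
proof -
  have "(\<Sum>j\<in>UNIV. n' j - w j) \<le> (\<Sum>j\<in>UNIV. \<bar>n' j - w j\<bar>)" by (rule sum_mono) auto
  thus ?thesis using assms unfolding neighbors_def absn_diff by simp
qed

lemma red_in: "\<forall>j. q j > 0 \<Longrightarrow> red q n \<in> Wdom q"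
  unfolding red_def Wdom_def by auto

lemma red_quo: "n j = red q n j + int (q j) * quo q n j"
  unfolding red_def quo_def by simp

lemma quo_bound:
  assumes q: "\<forall>j. q j > 0" and w: "w \<in> Wdom q" and n: "n' \<in> neighbors w"
  shows "\<bar>quo q n' j\<bar> \<le> 1"
proof -
  have w1: "0 \<le> w j" "w j < int (q j)" using w unfolding Wdom_def by auto
  have b: "-1 \<le> n' j" "n' j \<le> int (q j)" using nb_le[OF n, of j] w1 by (auto simp: abs_le_iff)
  have qp: "int (q j) > 0" using q by simp
  have "(-1) div int (q j) \<le> n' j div int (q j)" by (rule zdiv_mono1[OF b(1) qp])
  moreover have "(-1) div int (q j) = -1" using qp by (simp add: div_eq_minus1)
  moreover have "n' j div int (q j) \<le> int (q j) div int (q j)" by (rule zdiv_mono1[OF b(2) qp])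
  ultimately show ?thesis using qp unfolding quo_def by simp
qed

lemma absn_red_quo: "absn n = absn (red q n) + wdot (\<lambda>j. int (q j)) (quo q n)"
proof -
  have "(\<Sum>j\<in>UNIV. n j) = (\<Sum>j\<in>UNIV. red q n j + int (q j) * quo q n j)"
    by (rule sum.cong[OF refl], rule red_quo)
  thus ?thesis by (simp add: sum.distrib absn_def wdot_def)
qed

lemma fwd_char:
  "(n' \<in> neighbors a \<and> absn n' - absn a = 1) \<longleftrightarrow> (\<exists>j. n' = a(j := a j + 1))"
proof
  assume "\<exists>j. n' = a(j := a j + 1)"
  then obtain j where j: "n' = a(j := a j + 1)" by blast
  have d: "(\<lambda>i. n' i - a i) = (\<lambda>i. if i = j then 1 else 0)" using j by auto
  have d2: "(\<lambda>i. \<bar>n' i - a i\<bar>) = (\<lambda>i. if i = j then 1 else 0)" using j by auto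
  have "(\<Sum>i\<in>UNIV. \<bar>n' i - a i\<bar>) = 1" unfolding d2 by simp
  moreover have "(\<Sum>i\<in>UNIV. n' i - a i) = 1" unfolding d by simp
  ultimately show "n' \<in> neighbors a \<and> absn n' - absn a = 1" unfolding neighbors_def absn_diff by simp
next
  assume h: "n' \<in> neighbors a \<and> absn n' - absn a = 1"
  define d where "d = (\<lambda>i. n' i - a i)"
  have s1: "(\<Sum>i\<in>UNIV. \<bar>d i\<bar>) = 1" using h unfolding neighbors_def d_def by simp
  have s2: "(\<Sum>i\<in>UNIV. d i) = 1" using h unfolding absn_diff d_def by simp
  have "(\<Sum>i\<in>UNIV. \<bar>d i\<bar> - d i) = 0" using s1 s2 by (simp add: sum_subtractf)
  hence "\<forall>i\<in>UNIV. \<bar>d i\<bar> - d i = 0" by (subst sum_nonneg_eq_0_iff[symmetric]) auto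
  hence nn: "d i \<ge> 0" for i using abs_ge_zero[of "d i"] by simp
  obtain j where dj: "d j \<noteq> 0"
  proof (rule ccontr)
    assume "\<not> thesis"
    hence "\<forall>j. d j = 0" using that by blast
    hence "(\<Sum>i\<in>UNIV. d i) = 0" by simp
    thus False using s2 by simp
  qed
  have split: "(\<Sum>i\<in>UNIV. d i) = d j + (\<Sum>i\<in>UNIV - {j}. d i)"
    by (simp add: sum.remove[of UNIV j])
  have rest_nn: "(\<Sum>i\<in>UNIV - {j}. d i) \<ge> 0" by (rule sum_nonneg) (use nn in auto)
  have "d j \<ge> 1" using dj nn[of j] by simp
  hence dj1: "d j = 1" and rest0: "(\<Sum>i\<in>UNIV - {j}. d i) = 0" using split s2 rest_nn by linarith+
  have "\<forall>i\<in>UNIV - {j}. d i = 0" using rest0 by (subst sum_nonneg_eq_0_iff[symmetric]) (use nn in auto)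
  hence "n' = a(j := a j + 1)" using dj1 unfolding d_def by (auto simp: fun_eq_iff)
  thus "\<exists>j. n' = a(j := a j + 1)" by blast
qed

lemma fwd_inj: "inj (\<lambda>j. a(j := (a j + 1::int)))"
proof (rule injI)
  fix j k assume h: "a(j := a j + 1) = a(k := a k + 1)"
  show "j = k"
  proof (rule ccontr)
    assume "j \<noteq> k"
    from fun_cong[OF h, of j] this show False by simp
  qed
qed


lemma detS_tendsto_on:
  assumes "\<And>i j. i \<in> S \<Longrightarrow> j \<in> S \<Longrightarrow> ((\<lambda>t. M t i j) \<longlongrightarrow> L i j) F"
  shows "((\<lambda>t. detS S (M t)) \<longlongrightarrow> detS S L) F"
  unfolding detS_def
proof (intro tendsto_sum tendsto_mult tendsto_const tendsto_prod)
  fix p i assume "p \<in> {p. p permutes S}" "i \<in> S"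
  thus "((\<lambda>t. M t i (p i)) \<longlongrightarrow> L i (p i)) F" using assms permutes_in_image by fastforce
qed

lemma wdot_bound:
  assumes "\<forall>j. \<bar>u j\<bar> \<le> 1"
  shows "wdot w u \<le> (\<Sum>j\<in>UNIV. \<bar>w j\<bar>)"
  unfolding wdot_def
proof (rule sum_mono)
  fix j
  have "w j * u j \<le> \<bar>w j\<bar> * \<bar>u j\<bar>" by (metis abs_ge_self abs_mult)
  also have "\<dots> \<le> \<bar>w j\<bar> * 1" using assms by (intro mult_left_mono) auto
  finally show "w j * u j \<le> \<bar>w j\<bar>" by simp
qed

lemma powi_tendsto_le0:
  assumes "n \<le> 0"
  shows "((\<lambda>t::real. c * complex_of_real t powi n) \<longlongrightarrow> (if n = 0 then c else 0)) at_top"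
proof (cases "n = 0")
  case True thus ?thesis by simp
next
  case False
  hence "n < 0" using assms by simp
  from tendsto_mult[OF tendsto_const powi_cneg_tendsto[OF this], of c] False show ?thesis by simp
qed

lemma charP_lam:
  assumes q: "\<forall>j. q j > 0" and L: "(\<Sum>j\<in>UNIV. \<bar>w j\<bar>) < L"
  shows "((\<lambda>t. charP q V (cz w x t) (cl L \<mu> t) / complex_of_real t powi (L * int (card (Wdom q))))
            \<longlongrightarrow> (-\<mu>) ^ card (Wdom q)) at_top"
proof -
  define W where "W = Wdom q"
  have Lpos: "L > 0" using L by (smt (verit) sum_nonneg abs_ge_zero)
  define E where "E t a b = (if a = b then V a * complex_of_real t powi (-L) - \<mu> else 0) -
     (\<Sum>n'\<in>neighbors a. if red q n' = b then zpow x (quo q n') * complex_of_real t powi (wdot w (quo q n') - L) else 0)"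
    for t :: real and a b
  have entry: "(Dmat q V (cz w x t) a b - (if a = b then cl L \<mu> t else 0)) / complex_of_real t powi L = E t a b"
    if t: "t > 0" for t a b
  proof -
    let ?T = "complex_of_real t"
    have T: "?T \<noteq> 0" using t by simp
    have s: "(\<Sum>n'\<in>neighbors a. if red q n' = b then zpow (cz w x t) (quo q n') else 0) / ?T powi L =
        (\<Sum>n'\<in>neighbors a. if red q n' = b then zpow x (quo q n') * ?T powi (wdot w (quo q n') - L) else 0)"
      unfolding sum_divide_distrib
      by (rule sum.cong[OF refl]) (use T in \<open>simp add: zpow_cz power_int_diff\<close>)
    have d: "((if a = b then V a else 0) - (if a = b then cl L \<mu> t else 0)) / ?T powi L =
       (if a = b then V a * ?T powi (-L) - \<mu> else 0)"
    proof -
      have TL: "?T powi L \<noteq> 0" using T by simp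
      show ?thesis using TL by (auto simp: cl_def power_int_minus field_simps)
    qed
    show ?thesis unfolding E_def Dmat_def
      using s d by (simp add: diff_divide_distrib)
  qed
  have eq: "charP q V (cz w x t) (cl L \<mu> t) / complex_of_real t powi (L * int (card W)) = detS W (E t)"
    if t: "t > 0" for t
  proof -
    have "charP q V (cz w x t) (cl L \<mu> t) / complex_of_real t powi (L * int (card W)) =
       detS W (\<lambda>a b. (Dmat q V (cz w x t) a b - (if a = b then cl L \<mu> t else 0)) / complex_of_real t powi L)"
      unfolding charP_def W_def detS_scale by (simp add: power_int_mult)
    also have "\<dots> = detS W (E t)" using entry[OF t] by simp
    finally show ?thesis .
  qed
  have lim: "((\<lambda>t. E t a b) \<longlongrightarrow> (if a = b then - \<mu> else 0)) at_top" if a: "a \<in> W" for a b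
  proof -
    have l1: "((\<lambda>t. (if a = b then V a * complex_of_real t powi (-L) - \<mu> else 0)) \<longlongrightarrow>
               (if a = b then 0 - \<mu> else 0)) at_top"
    proof -
      have "((\<lambda>t. V a * complex_of_real t powi (-L)) \<longlongrightarrow> 0) at_top"
        using powi_tendsto_le0[of "-L" "V a"] Lpos by simp
      from tendsto_diff[OF this tendsto_const[of \<mu>]] show ?thesis by (cases "a = b") auto
    qed
    have l2: "((\<lambda>t. \<Sum>n'\<in>neighbors a. if red q n' = b then zpow x (quo q n') * complex_of_real t powi (wdot w (quo q n') - L) else 0)
       \<longlongrightarrow> (\<Sum>n'\<in>neighbors a. 0)) at_top"
    proof (rule tendsto_sum)
      fix n' assume n': "n' \<in> neighbors a"
      have "wdot w (quo q n') \<le> (\<Sum>j\<in>UNIV. \<bar>w j\<bar>)"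
        using quo_bound[OF q a[unfolded W_def] n'] by (intro wdot_bound) auto
      hence neg: "wdot w (quo q n') - L < 0" using L by simp
      show "((\<lambda>t. if red q n' = b then zpow x (quo q n') * complex_of_real t powi (wdot w (quo q n') - L) else 0) \<longlongrightarrow> 0) at_top"
        using powi_tendsto_le0[of "wdot w (quo q n') - L" "zpow x (quo q n')"] neg by (cases "red q n' = b") auto
    qed
    from tendsto_diff[OF l1 l2] have "((\<lambda>t. E t a b) \<longlongrightarrow> (if a = b then 0 - \<mu> else 0) - (\<Sum>n'\<in>neighbors a. 0)) at_top"
      unfolding E_def .
    moreover have "(if a = b then 0 - \<mu> else 0) - (\<Sum>n'\<in>neighbors a. 0) = (if a = b then - \<mu> else 0)" by simp
    ultimately show ?thesis by simp
  qed
  have "((\<lambda>t. detS W (E t)) \<longlongrightarrow> detS W (\<lambda>a b. if a = b then - \<mu> else 0)) at_top"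
    by (rule detS_tendsto_on) (rule lim)
  also have "detS W (\<lambda>a b. if a = b then - \<mu> else 0) = (-\<mu>) ^ card W"
    using detS_diag[OF finite_Wdom[of q], of "\<lambda>_. - \<mu>"] unfolding W_def by simp
  finally have "((\<lambda>t. detS W (E t)) \<longlongrightarrow> (-\<mu>) ^ card W) at_top" .
  thus ?thesis unfolding W_def[symmetric]
    by (rule Lim_transform_eventually) (rule eventually_mono[OF eventually_gt_at_top[of 0]], simp add: eq)
qed


definition Alim :: "('d::finite \<Rightarrow> nat) \<Rightarrow> ('d \<Rightarrow> complex) \<Rightarrow> ('d \<Rightarrow> int) \<Rightarrow> ('d \<Rightarrow> int) \<Rightarrow> complex" where
  "Alim q x a b = - (\<Sum>n'\<in>neighbors a. if red q n' = b \<and> absn n' - absn a = 1 then zpow x (quo q n') else 0)"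

lemma ring_split: "(c::complex) * ((A - S) - C) / G / T = c * (A - C) / G / T - c * S / G / T"
  by (simp add: divide_inverse algebra_simps)

lemma charP_top:
  assumes q: "\<forall>j. q j > 0"
  shows "((\<lambda>t. charP q V (cz (\<lambda>j. int (q j)) x t) (cl 1 \<mu> t) / complex_of_real t powi int (card (Wdom q)))
           \<longlongrightarrow> detS (Wdom q) (\<lambda>a b. Alim q x a b - (if a = b then \<mu> else 0))) at_top"
proof -
  define W where "W = Wdom q"
  define wq where "wq = (\<lambda>j. int (q j))"
  define E where "E t a b = (if a = b then V a * complex_of_real t powi (-1) - \<mu> else 0) -
     (\<Sum>n'\<in>neighbors a. if red q n' = b then zpow x (quo q n') * complex_of_real t powi (absn n' - absn a - 1) else 0)"
    for t :: real and a b
  have entry: "complex_of_real t powi (- absn a) * (Dmat q V (cz wq x t) a b - (if a = b then cl 1 \<mu> t else 0))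
      / complex_of_real t powi (- absn b) / complex_of_real t = E t a b"
    if t: "t > 0" for t a b
  proof -
    let ?T = "complex_of_real t"
    have T: "?T \<noteq> 0" using t by simp
    have s: "?T powi (- absn a) * (\<Sum>n'\<in>neighbors a. if red q n' = b then zpow (cz wq x t) (quo q n') else 0) / ?T powi (- absn b) / ?T =
        (\<Sum>n'\<in>neighbors a. if red q n' = b then zpow x (quo q n') * ?T powi (absn n' - absn a - 1) else 0)"
      unfolding sum_distrib_left sum_divide_distrib
    proof (rule sum.cong[OF refl])
      fix n' assume n': "n' \<in> neighbors a"
      show "?T powi (- absn a) * (if red q n' = b then zpow (cz wq x t) (quo q n') else 0) / ?T powi (- absn b) / ?T =
        (if red q n' = b then zpow x (quo q n') * ?T powi (absn n' - absn a - 1) else 0)"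
      proof (cases "red q n' = b")
        case True
        have e: "absn n' - absn a - 1 = - absn a + wdot wq (quo q n') - (- absn b) - 1"
          using absn_red_quo[of n' q] True unfolding wq_def by simp
        have "?T powi (absn n' - absn a - 1) = ?T powi (- absn a) * ?T powi (wdot wq (quo q n')) / ?T powi (- absn b) / ?T"
          unfolding e using T by (simp add: power_int_add power_int_diff power_int_minus field_simps)
        thus ?thesis using True T by (simp add: zpow_cz)
      next
        case False thus ?thesis by simp
      qed
    qed
    have d: "?T powi (- absn a) * ((if a = b then V a else 0) - (if a = b then cl 1 \<mu> t else 0)) / ?T powi (- absn b) / ?T
        = (if a = b then V a * ?T powi (-1) - \<mu> else 0)"
      using T by (auto simp: cl_def power_int_minus field_simps)
    show ?thesis unfolding E_def Dmat_def ring_split using s d by simp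
  qed
  have eq: "charP q V (cz wq x t) (cl 1 \<mu> t) / complex_of_real t ^ card W = detS W (E t)"
    if t: "t > 0" for t
  proof -
    let ?T = "complex_of_real t"
    have T: "?T \<noteq> 0" using t by simp
    define M where "M a b = Dmat q V (cz wq x t) a b - (if a = b then cl 1 \<mu> t else 0)" for a b
    have "charP q V (cz wq x t) (cl 1 \<mu> t) = detS W M" unfolding charP_def M_def W_def by simp
    also have "\<dots> = detS W (\<lambda>a b. ?T powi (- absn a) * M a b / ?T powi (- absn b))"
      by (rule detS_conj[symmetric]) (use T finite_Wdom[of q] in \<open>auto simp: W_def\<close>)
    moreover have "detS W (\<lambda>a b. ?T powi (- absn a) * M a b / ?T powi (- absn b) / ?T) =
        detS W (\<lambda>a b. ?T powi (- absn a) * M a b / ?T powi (- absn b)) / ?T ^ card W"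
      by (rule detS_scale)
    ultimately have "charP q V (cz wq x t) (cl 1 \<mu> t) / ?T ^ card W =
        detS W (\<lambda>a b. ?T powi (- absn a) * M a b / ?T powi (- absn b) / ?T)"
      by simp
    also have "\<dots> = detS W (E t)" using entry[OF t] unfolding M_def by simp
    finally show ?thesis by simp
  qed
  have lim: "((\<lambda>t. E t a b) \<longlongrightarrow> Alim q x a b - (if a = b then \<mu> else 0)) at_top" for a b
  proof -
    have l1: "((\<lambda>t. (if a = b then V a * complex_of_real t powi (-1) - \<mu> else 0)) \<longlongrightarrow>
               (if a = b then 0 - \<mu> else 0)) at_top"
    proof -
      have "((\<lambda>t. V a * complex_of_real t powi (-1)) \<longlongrightarrow> 0) at_top"
        using powi_tendsto_le0[of "-1" "V a"] by simp
      from tendsto_diff[OF this tendsto_const[of \<mu>]] show ?thesis by (cases "a = b") auto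
    qed
    have l2: "((\<lambda>t. \<Sum>n'\<in>neighbors a. if red q n' = b then zpow x (quo q n') * complex_of_real t powi (absn n' - absn a - 1) else 0)
       \<longlongrightarrow> (\<Sum>n'\<in>neighbors a. if red q n' = b \<and> absn n' - absn a = 1 then zpow x (quo q n') else 0)) at_top"
    proof (rule tendsto_sum)
      fix n' assume n': "n' \<in> neighbors a"
      have le: "absn n' - absn a - 1 \<le> 0" using nb_sum_le[OF n'] by simp
      show "((\<lambda>t. if red q n' = b then zpow x (quo q n') * complex_of_real t powi (absn n' - absn a - 1) else 0)
         \<longlongrightarrow> (if red q n' = b \<and> absn n' - absn a = 1 then zpow x (quo q n') else 0)) at_top"
        using powi_tendsto_le0[OF le, of "zpow x (quo q n')"] by (cases "red q n' = b") auto
    qed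
    from tendsto_diff[OF l1 l2] have "((\<lambda>t. E t a b) \<longlongrightarrow> (if a = b then 0 - \<mu> else 0) -
       (\<Sum>n'\<in>neighbors a. if red q n' = b \<and> absn n' - absn a = 1 then zpow x (quo q n') else 0)) at_top"
      unfolding E_def .
    moreover have "(if a = b then 0 - \<mu> else 0) -
       (\<Sum>n'\<in>neighbors a. if red q n' = b \<and> absn n' - absn a = 1 then zpow x (quo q n') else 0)
      = Alim q x a b - (if a = b then \<mu> else 0)" unfolding Alim_def by simp
    ultimately show ?thesis by simp
  qed
  have "((\<lambda>t. detS W (E t)) \<longlongrightarrow> detS W (\<lambda>a b. Alim q x a b - (if a = b then \<mu> else 0))) at_top"
    by (rule detS_tendsto_on) (rule lim)
  thus ?thesis unfolding W_def[symmetric] wq_def[symmetric]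
    by (rule Lim_transform_eventually) (rule eventually_mono[OF eventually_gt_at_top[of 0]], simp add: eq)
qed

lemma zpow_floquet:
  assumes nz: "\<forall>j. \<Omega> j \<noteq> 0" and Ox: "\<forall>j. \<Omega> j ^ q j = x j"
  shows "zpow x (quo q n) * zpow \<Omega> (red q n) = zpow \<Omega> n"
proof -
  have "zpow x (quo q n) * zpow \<Omega> (red q n) = (\<Prod>j\<in>UNIV. x j powi quo q n j * \<Omega> j powi red q n j)"
    unfolding zpow_def by (simp add: prod.distrib)
  also have "\<dots> = (\<Prod>j\<in>UNIV. \<Omega> j powi n j)"
  proof (rule prod.cong[OF refl])
    fix j
    have "x j powi quo q n j = \<Omega> j powi (int (q j) * quo q n j)"
      using Ox by (simp add: power_int_mult flip: power_int_of_nat)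
    hence "x j powi quo q n j * \<Omega> j powi red q n j = \<Omega> j powi (red q n j + int (q j) * quo q n j)"
      using nz by (simp add: power_int_add)
    thus "x j powi quo q n j * \<Omega> j powi red q n j = \<Omega> j powi n j" by (simp flip: red_quo)
  qed
  finally show ?thesis unfolding zpow_def .
qed

lemma zpow_step:
  assumes nz: "\<Omega> j \<noteq> 0"
  shows "zpow \<Omega> (a(j := a j + 1)) = \<Omega> j * zpow \<Omega> a"
proof -
  have "zpow \<Omega> (a(j := a j + 1)) = (\<Prod>i\<in>UNIV. (if i = j then \<Omega> j else 1) * \<Omega> i powi a i)"
    unfolding zpow_def by (rule prod.cong[OF refl]) (use nz in \<open>simp add: power_int_add_1'\<close>)
  also have "\<dots> = \<Omega> j * zpow \<Omega> a" unfolding zpow_def prod.distrib by simp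
  finally show ?thesis .
qed

lemma eigen_zero:
  assumes q: "\<forall>j. q j > 0" and nz: "\<forall>j. \<Omega> j \<noteq> 0" and Ox: "\<forall>j. \<Omega> j ^ q j = x j"
  shows "detS (Wdom q) (\<lambda>a b. Alim q x a b - (if a = b then - (\<Sum>j\<in>UNIV. \<Omega> j) else 0)) = 0"
proof -
  have h1: "(\<lambda>_. 0) \<in> Wdom q" using q by (simp add: Wdom_def)
  have h2: "zpow \<Omega> (\<lambda>_. 0) \<noteq> 0" by (simp add: zpow_def)
  have h3: "\<forall>i\<in>Wdom q. (\<Sum>j\<in>Wdom q. (Alim q x i j - (if i = j then - (\<Sum>j\<in>UNIV. \<Omega> j) else 0)) * zpow \<Omega> j) = 0"
  proof
    fix a assume a: "a \<in> Wdom q"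
    let ?W = "Wdom q"
    let ?F = "\<lambda>n'. absn n' - absn a = 1"
    have fin: "finite ?W" by (rule finite_Wdom)
    have "(\<Sum>b\<in>?W. Alim q x a b * zpow \<Omega> b) =
       - (\<Sum>b\<in>?W. \<Sum>n'\<in>neighbors a. if b = red q n' then (if ?F n' then zpow x (quo q n') * zpow \<Omega> (red q n') else 0) else 0)"
      unfolding Alim_def sum_distrib_right sum_negf[symmetric]
      by (intro sum.cong refl arg_cong[where f = uminus]) auto
    also have "\<dots> = - (\<Sum>n'\<in>neighbors a. \<Sum>b\<in>?W. if b = red q n' then (if ?F n' then zpow x (quo q n') * zpow \<Omega> (red q n') else 0) else 0)"
      by (subst sum.swap) simp
    also have "\<dots> = - (\<Sum>n'\<in>neighbors a. if ?F n' then zpow x (quo q n') * zpow \<Omega> (red q n') else 0)"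
      using red_in[OF q] fin by simp
    also have "\<dots> = - (\<Sum>n'\<in>neighbors a. if ?F n' then zpow \<Omega> n' else 0)"
      by (intro arg_cong[where f=uminus] sum.cong refl) (subst zpow_floquet[OF nz Ox], rule refl)
    also have "\<dots> = - (\<Sum>n'\<in>{n'\<in>neighbors a. ?F n'}. zpow \<Omega> n')"
      by (simp add: sum.inter_filter[OF finite_neighbors])
    also have "{n'\<in>neighbors a. ?F n'} = range (\<lambda>j. a(j := a j + 1))"
      using fwd_char[of _ a] by blast
    also have "(\<Sum>n'\<in>range (\<lambda>j. a(j := a j + 1)). zpow \<Omega> n') = (\<Sum>j\<in>UNIV. zpow \<Omega> (a(j := a j + 1)))"
      by (subst sum.reindex[OF fwd_inj]) simp
    also have "\<dots> = (\<Sum>j\<in>UNIV. \<Omega> j) * zpow \<Omega> a"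
      using nz by (simp add: zpow_step sum_distrib_right)
    finally have A: "(\<Sum>b\<in>?W. Alim q x a b * zpow \<Omega> b) = - ((\<Sum>j\<in>UNIV. \<Omega> j) * zpow \<Omega> a)" .
    have B: "(\<Sum>b\<in>?W. (if a = b then - (\<Sum>j\<in>UNIV. \<Omega> j) else 0) * zpow \<Omega> b) = - (\<Sum>j\<in>UNIV. \<Omega> j) * zpow \<Omega> a"
      using a fin by (simp add: if_distrib[of "\<lambda>u. u * _"] cong: if_cong)
    show "(\<Sum>b\<in>?W. (Alim q x a b - (if a = b then - (\<Sum>j\<in>UNIV. \<Omega> j) else 0)) * zpow \<Omega> b) = 0"
      unfolding left_diff_distrib sum_subtractf A B by simp
  qed
  show ?thesis by (rule detS_kernel_zero[OF finite_Wdom h1 h2 h3])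
qed


lemma two_powi_eq1:
  assumes "(2::complex) powi m = 1"
  shows "m = 0"
proof (rule ccontr)
  assume m: "m \<noteq> 0"
  have "norm ((2::complex) powi m) = (2::real) powi m" by (simp add: norm_power_int)
  hence r: "(2::real) powi m = 1" using assms by simp
  show False
  proof (cases "m > 0")
    case True
    hence g: "(2::real) ^ nat m > 1" by (intro one_less_power) auto
    have "(2::real) ^ nat m = 1" using r True by (simp add: power_int_def)
    thus False using g by linarith
  next
    case False
    hence "nat (-m) > 0" using m by simp
    hence "(2::real) ^ nat (-m) > 1" by (intro one_less_power) auto
    hence g: "inverse ((2::real) ^ nat (-m)) < 1" by (simp add: inverse_less_1_iff)
    have mm: "m = - int (nat (-m))" using False by simp
    have "(2::real) powi m = (2::real) powi (- int (nat (-m)))" by (subst mm) simp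
    also have "\<dots> = inverse ((2::real) powi int (nat (-m)))" by (rule power_int_minus)
    also have "\<dots> = inverse ((2::real) ^ nat (-m))" by (simp only: power_int_of_nat)
    finally have "inverse ((2::real) ^ nat (-m)) = 1" using r by simp
    thus False using g by linarith
  qed
qed

lemma int_mult_small:
  fixes L m d :: int
  assumes "L * m = d" "\<bar>d\<bar> < L"
  shows "m = 0"
proof (rule ccontr)
  assume "m \<noteq> 0"
  hence "\<bar>m\<bar> \<ge> 1" by simp
  moreover have "L > 0" using assms(2) by simp
  ultimately have "\<bar>L * m\<bar> \<ge> L" by (simp add: abs_mult)
  thus False using assms by simp
qed

lemma top_props:
  assumes lp: "is_lp f" and ne: "lsupp f \<noteq> {}" and inj: "inj_on (wt w L) (lsupp f)"
    and M0: "\<forall>s\<in>lsupp f. \<bar>wdot w (fst s)\<bar> \<le> M0" and L: "L > 2 * M0"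
  shows "\<exists>s. s \<in> lsupp f \<and> lsupp (topc f w L) = {s} \<and> wt w L s = emax f w L \<and>
            snd s = Max (snd ` lsupp f) \<and> (\<forall>a. (a, snd s) \<in> lsupp f \<longrightarrow> wdot w a \<le> wdot w (fst s))"
proof -
  have fin: "finite (lsupp f)" using lp unfolding is_lp_def lsupp_def .
  obtain s0 where s0: "s0 \<in> lsupp f" "wt w L s0 = emax f w L" "lsupp (topc f w L) = {s0}"
    using top_single[OF lp ne inj] by blast
  have le: "wt w L s \<le> emax f w L" if "s \<in> lsupp f" for s
    unfolding emax_def using fin that by (intro Max_ge) auto
  define K where "K = Max (snd ` lsupp f)"
  have "K \<in> snd ` lsupp f" unfolding K_def using fin ne by (intro Max_in) auto
  then obtain s' where s': "s' \<in> lsupp f" "snd s' = K" by auto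
  have sK: "snd s0 \<le> K" unfolding K_def using fin s0(1) by (intro Max_ge) auto
  have "snd s0 = K"
  proof (rule ccontr)
    assume "snd s0 \<noteq> K"
    hence lt: "int (snd s0) \<le> int K - 1" using sK by simp
    have "L > 0" using L M0 s0(1) by (smt (verit) abs_ge_zero)
    have "wt w L s0 = wdot w (fst s0) + L * int (snd s0)" unfolding wt_def by simp
    also have "\<dots> \<le> M0 + L * (int K - 1)"
      using M0 s0(1) lt \<open>L > 0\<close> by (intro add_mono) (auto intro: mult_left_mono)
    also have "\<dots> < - M0 + L * int K" using L by (simp add: algebra_simps)
    also have "\<dots> \<le> wt w L s'" unfolding wt_def using M0 s'(1) s'(2) by auto
    finally have "wt w L s0 < wt w L s'" .
    thus False using le[OF s'(1)] s0(2) by simp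
  qed
  moreover have "wdot w a \<le> wdot w (fst s0)" if "(a, snd s0) \<in> lsupp f" for a
    using le[OF that] s0(2) unfolding wt_def by simp
  ultimately show ?thesis using s0 unfolding K_def by blast
qed


lemma weight_step:
  fixes f1 f2 :: "('d::finite \<Rightarrow> int) \<times> nat \<Rightarrow> complex" and w :: "'d \<Rightarrow> int"
  assumes q: "\<forall>j. q j > 0" and lp1: "is_lp f1" and lp2: "is_lp f2"
    and ne1: "lsupp f1 \<noteq> {}" and ne2: "lsupp f2 \<noteq> {}"
    and fac: "\<forall>z lam. (\<forall>j. z j \<noteq> 0) \<longrightarrow> charP q V z lam = lp_eval f1 z lam * lp_eval f2 z lam"
    and M0: "\<forall>s\<in>lsupp f1 \<union> lsupp f2. \<bar>wdot w (fst s)\<bar> \<le> M0"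
    and winj: "inj_on (wdot w) (fst ` (lsupp f1 \<union> lsupp f2))"
    and Ldef: "L = 2 * M0 + 1 + (\<Sum>j\<in>UNIV. \<bar>w j\<bar>)"
  shows "\<exists>s1 s2. s1 \<in> lsupp f1 \<and> s2 \<in> lsupp f2 \<and> snd s1 = Max (snd ` lsupp f1) \<and> snd s2 = Max (snd ` lsupp f2)
     \<and> (\<forall>a. (a, snd s1) \<in> lsupp f1 \<longrightarrow> wdot w a \<le> wdot w (fst s1))
     \<and> (\<forall>a. (a, snd s2) \<in> lsupp f2 \<longrightarrow> wdot w a \<le> wdot w (fst s2))
     \<and> wdot w (fst s1) + wdot w (fst s2) = 0 \<and> snd s1 + snd s2 = card (Wdom q)
     \<and> (\<forall>x. (\<forall>j. x j \<noteq> 0) \<longrightarrow> f1 s1 * f2 s2 * (zpow x (fst s1) * zpow x (fst s2)) = (-1) ^ card (Wdom q))"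
proof -
  define S where "S = lsupp f1 \<union> lsupp f2"
  define Q where "Q = card (Wdom q)"
  obtain s00 where "s00 \<in> lsupp f1" using ne1 by blast
  hence M0nn: "M0 \<ge> 0" using M0 by (meson UnI1 abs_ge_zero order_trans)
  have sw: "(\<Sum>j\<in>UNIV. \<bar>w j\<bar>) \<ge> 0" by (rule sum_nonneg) auto
  have L2: "L > 2 * M0" using Ldef sw by linarith
  have Lw: "(\<Sum>j\<in>UNIV. \<bar>w j\<bar>) < L" using Ldef M0nn by simp
  have injS: "inj_on (wt w L) S"
  proof (rule inj_onI)
    fix s s' assume s: "s \<in> S" "s' \<in> S" "wt w L s = wt w L s'"
    have b: "\<bar>wdot w (fst s)\<bar> \<le> M0" "\<bar>wdot w (fst s')\<bar> \<le> M0" using M0 s unfolding S_def by auto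
    have "L * (int (snd s) - int (snd s')) = wdot w (fst s') - wdot w (fst s)"
      using s(3) unfolding wt_def by (simp add: algebra_simps)
    moreover have "\<bar>wdot w (fst s') - wdot w (fst s)\<bar> < L" using b L2 by simp
    ultimately have "int (snd s) - int (snd s') = 0" by (rule int_mult_small)
    hence k: "snd s = snd s'" by simp
    hence "wdot w (fst s) = wdot w (fst s')" using s(3) unfolding wt_def by simp
    hence "fst s = fst s'" using winj s unfolding S_def inj_on_def by blast
    thus "s = s'" using k by (simp add: prod_eq_iff)
  qed
  have M01: "\<forall>s\<in>lsupp f1. \<bar>wdot w (fst s)\<bar> \<le> M0" and M02: "\<forall>s\<in>lsupp f2. \<bar>wdot w (fst s)\<bar> \<le> M0"
    using M0 by auto
  obtain s1 where s1: "s1 \<in> lsupp f1" "lsupp (topc f1 w L) = {s1}" "wt w L s1 = emax f1 w L"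
      "snd s1 = Max (snd ` lsupp f1)" "\<forall>a. (a, snd s1) \<in> lsupp f1 \<longrightarrow> wdot w a \<le> wdot w (fst s1)"
    using top_props[OF lp1 ne1 inj_on_subset[OF injS] M01 L2] unfolding S_def by blast
  obtain s2 where s2: "s2 \<in> lsupp f2" "lsupp (topc f2 w L) = {s2}" "wt w L s2 = emax f2 w L"
      "snd s2 = Max (snd ` lsupp f2)" "\<forall>a. (a, snd s2) \<in> lsupp f2 \<longrightarrow> wdot w a \<le> wdot w (fst s2)"
    using top_props[OF lp2 ne2 inj_on_subset[OF injS] M02 L2] unfolding S_def by blast
  define E1 where "E1 = emax f1 w L"
  define E2 where "E2 = emax f2 w L"
  have lim1: "((\<lambda>t. lp_eval f1 (cz w x t) (cl L 1 t) / complex_of_real t powi E1) \<longlongrightarrow> f1 s1 * zpow x (fst s1)) at_top" for x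
  proof -
    have "lp_eval (topc f1 w L) x 1 = f1 s1 * zpow x (fst s1)"
      using lp_eval_single[OF s1(2)] s1(3) unfolding topc_def by simp
    thus ?thesis using top_limit[OF lp1 ne1, of w x L 1] unfolding E1_def by simp
  qed
  have lim2: "((\<lambda>t. lp_eval f2 (cz w x t) (cl L 1 t) / complex_of_real t powi E2) \<longlongrightarrow> f2 s2 * zpow x (fst s2)) at_top" for x
  proof -
    have "lp_eval (topc f2 w L) x 1 = f2 s2 * zpow x (fst s2)"
      using lp_eval_single[OF s2(2)] s2(3) unfolding topc_def by simp
    thus ?thesis using top_limit[OF lp2 ne2, of w x L 1] unfolding E2_def by simp
  qed
  have limP: "((\<lambda>t. charP q V (cz w x t) (cl L 1 t) / complex_of_real t powi (L * int Q)) \<longlongrightarrow> (-1) ^ Q) at_top" for x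
    using charP_lam[OF q Lw, of V x 1] unfolding Q_def by simp
  have limprod: "((\<lambda>t. charP q V (cz w x t) (cl L 1 t) / complex_of_real t powi (E1 + E2)) \<longlongrightarrow>
      f1 s1 * zpow x (fst s1) * (f2 s2 * zpow x (fst s2))) at_top" if x: "\<forall>j. x j \<noteq> 0" for x
  proof -
    have "((\<lambda>t. lp_eval f1 (cz w x t) (cl L 1 t) / complex_of_real t powi E1 * (lp_eval f2 (cz w x t) (cl L 1 t) / complex_of_real t powi E2))
      \<longlongrightarrow> f1 s1 * zpow x (fst s1) * (f2 s2 * zpow x (fst s2))) at_top"
      by (rule tendsto_mult[OF lim1 lim2])
    moreover have "eventually (\<lambda>t. lp_eval f1 (cz w x t) (cl L 1 t) / complex_of_real t powi E1 * (lp_eval f2 (cz w x t) (cl L 1 t) / complex_of_real t powi E2)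
       = charP q V (cz w x t) (cl L 1 t) / complex_of_real t powi (E1 + E2)) at_top"
    proof (rule eventually_mono[OF eventually_gt_at_top[of 0]])
      fix t :: real assume t: "t > 0"
      have nz: "\<forall>j. cz w x t j \<noteq> 0" using t x unfolding cz_def by simp
      show "lp_eval f1 (cz w x t) (cl L 1 t) / complex_of_real t powi E1 * (lp_eval f2 (cz w x t) (cl L 1 t) / complex_of_real t powi E2)
       = charP q V (cz w x t) (cl L 1 t) / complex_of_real t powi (E1 + E2)"
        using fac nz t by (simp add: power_int_add)
    qed
    ultimately show ?thesis by (rule Lim_transform_eventually)
  qed
  have one: "(\<forall>j. (\<lambda>_. 1::complex) j \<noteq> 0)" by simp
  have c0: "f1 s1 * zpow (\<lambda>_. 1) (fst s1) * (f2 s2 * zpow (\<lambda>_. 1) (fst s2)) \<noteq> 0"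
    using s1(1) s2(1) unfolding lsupp_def by (simp add: zpow_one)
  have "E1 + E2 - L * int Q = 0"
  proof (rule powi_exp_zero[OF limprod[OF one] _ c0])
    show "(-1::complex) ^ Q \<noteq> 0" by simp
    have "eventually (\<lambda>t. charP q V (cz w (\<lambda>_. 1) t) (cl L 1 t) / complex_of_real t powi (E1 + E2) *
        complex_of_real t powi (E1 + E2 - L * int Q) = charP q V (cz w (\<lambda>_. 1) t) (cl L 1 t) / complex_of_real t powi (L * int Q)) at_top"
      by (rule eventually_mono[OF eventually_gt_at_top[of 0]]) (simp add: power_int_diff)
    thus "((\<lambda>t. charP q V (cz w (\<lambda>_. 1) t) (cl L 1 t) / complex_of_real t powi (E1 + E2) *
        complex_of_real t powi (E1 + E2 - L * int Q)) \<longlongrightarrow> (-1) ^ Q) at_top"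
      using limP[of "\<lambda>_. 1"] Lim_transform_eventually eventually_mono by (smt (verit) tendsto_cong)
  qed
  hence EE: "E1 + E2 = L * int Q" by simp
  have rel: "f1 s1 * f2 s2 * (zpow x (fst s1) * zpow x (fst s2)) = (-1) ^ Q" if x: "\<forall>j. x j \<noteq> 0" for x
  proof -
    have "((\<lambda>t. charP q V (cz w x t) (cl L 1 t) / complex_of_real t powi (L * int Q)) \<longlongrightarrow>
      f1 s1 * zpow x (fst s1) * (f2 s2 * zpow x (fst s2))) at_top" using limprod[OF x] EE by simp
    from tendsto_unique[OF trivial_limit_at_top_linorder this limP[of x]] show ?thesis by (simp add: algebra_simps)
  qed
  have E1e: "E1 = wdot w (fst s1) + L * int (snd s1)" using s1(3) unfolding E1_def wt_def by simp
  have E2e: "E2 = wdot w (fst s2) + L * int (snd s2)" using s2(3) unfolding E2_def wt_def by simp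
  have "L * (int (snd s1 + snd s2) - int Q) = - (wdot w (fst s1) + wdot w (fst s2))"
    using EE E1e E2e by (simp add: algebra_simps)
  moreover have "\<bar>- (wdot w (fst s1) + wdot w (fst s2))\<bar> < L"
    using M0 s1(1) s2(1) L2 by (smt (verit) UnI1 UnI2)
  ultimately have "int (snd s1 + snd s2) - int Q = 0" by (rule int_mult_small)
  hence kk: "snd s1 + snd s2 = Q" by simp
  have "int Q = int (snd s1) + int (snd s2)" using kk by simp
  hence ww: "wdot w (fst s1) + wdot w (fst s2) = 0" using EE E1e E2e by (simp add: algebra_simps)
  show ?thesis
    using s1 s2 kk ww rel unfolding Q_def by blast
qed


lemma zpow_delta2: "zpow (\<lambda>i. if i = j then 2 else 1) a = 2 powi a j"
proof -
  have "zpow (\<lambda>i. if i = j then 2 else 1) a = (\<Prod>i\<in>UNIV. if i = j then 2 powi a j else 1)"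
    unfolding zpow_def by (rule prod.cong) auto
  thus ?thesis by simp
qed

lemma units_step:
  fixes f1 f2 :: "('d::finite \<Rightarrow> int) \<times> nat \<Rightarrow> complex"
  assumes q: "\<forall>j. q j > 0" and lp1: "is_lp f1" and lp2: "is_lp f2"
    and ne1: "lsupp f1 \<noteq> {}" and ne2: "lsupp f2 \<noteq> {}"
    and fac: "\<forall>z lam. (\<forall>j. z j \<noteq> 0) \<longrightarrow> charP q V z lam = lp_eval f1 z lam * lp_eval f2 z lam"
  shows "\<exists>k1 k2 b1 b2. k1 + k2 = card (Wdom q) \<and> (\<forall>j. b1 j + b2 j = 0) \<and>
     (\<forall>s\<in>lsupp f1. snd s \<le> k1) \<and> (\<forall>s\<in>lsupp f2. snd s \<le> k2) \<and>
     (\<forall>a. (a,k1) \<in> lsupp f1 \<longleftrightarrow> a = b1) \<and> (\<forall>a. (a,k2) \<in> lsupp f2 \<longleftrightarrow> a = b2)"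
proof -
  define S where "S = lsupp f1 \<union> lsupp f2"
  have finS: "finite S" using lp1 lp2 unfolding S_def is_lp_def lsupp_def by auto
  define A where "A = fst ` S"
  have finA: "finite A" unfolding A_def using finS by simp
  define D where "D = (\<lambda>(a,b). a - b) ` {(a,b). a \<in> A \<and> b \<in> A \<and> a \<noteq> b}"
  have finD: "finite D" unfolding D_def
    by (rule finite_imageI, rule finite_subset[of _ "A \<times> A"]) (use finA in auto)
  have "0 \<notin> D" unfolding D_def by auto
  then obtain w :: "'d \<Rightarrow> int" where w: "\<forall>v\<in>D. wdot w v \<noteq> 0" using sep_exists[OF finD] by blast
  have winj: "inj_on (wdot w) A"
  proof (rule inj_onI, rule ccontr)
    fix a b assume "a \<in> A" "b \<in> A" "wdot w a = wdot w b" "a \<noteq> b"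
    hence "a - b \<in> D" unfolding D_def by auto
    thus False using w \<open>wdot w a = wdot w b\<close> by (auto simp: wdot_diff)
  qed
  have winj': "inj_on (wdot (-w)) A" using winj unfolding inj_on_def wdot_neg by simp
  define M0 where "M0 = Max (insert 0 ((\<lambda>a. \<bar>wdot w a\<bar>) ` A))"
  have M0: "\<forall>s\<in>lsupp f1 \<union> lsupp f2. \<bar>wdot w (fst s)\<bar> \<le> M0"
    unfolding M0_def using finA unfolding A_def S_def by (auto intro!: Max_ge)
  have M0': "\<forall>s\<in>lsupp f1 \<union> lsupp f2. \<bar>wdot (-w) (fst s)\<bar> \<le> M0" using M0 by (simp add: wdot_neg)
  define L where "L = 2 * M0 + 1 + (\<Sum>j\<in>UNIV. \<bar>w j\<bar>)"
  have L': "L = 2 * M0 + 1 + (\<Sum>j\<in>UNIV. \<bar>(-w) j\<bar>)" unfolding L_def by simp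
  obtain s1 s2 where A1: "s1 \<in> lsupp f1 \<and> s2 \<in> lsupp f2 \<and> snd s1 = Max (snd ` lsupp f1) \<and> snd s2 = Max (snd ` lsupp f2)
     \<and> (\<forall>a. (a, snd s1) \<in> lsupp f1 \<longrightarrow> wdot w a \<le> wdot w (fst s1))
     \<and> (\<forall>a. (a, snd s2) \<in> lsupp f2 \<longrightarrow> wdot w a \<le> wdot w (fst s2))
     \<and> wdot w (fst s1) + wdot w (fst s2) = 0 \<and> snd s1 + snd s2 = card (Wdom q)
     \<and> (\<forall>x. (\<forall>j. x j \<noteq> 0) \<longrightarrow> f1 s1 * f2 s2 * (zpow x (fst s1) * zpow x (fst s2)) = (-1) ^ card (Wdom q))"
    using weight_step[OF q lp1 lp2 ne1 ne2 fac M0 winj[unfolded A_def S_def] L_def] by blast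
  obtain s1' s2' where A2: "s1' \<in> lsupp f1 \<and> s2' \<in> lsupp f2 \<and> snd s1' = Max (snd ` lsupp f1) \<and> snd s2' = Max (snd ` lsupp f2)
     \<and> (\<forall>a. (a, snd s1') \<in> lsupp f1 \<longrightarrow> wdot (-w) a \<le> wdot (-w) (fst s1'))
     \<and> (\<forall>a. (a, snd s2') \<in> lsupp f2 \<longrightarrow> wdot (-w) a \<le> wdot (-w) (fst s2'))
     \<and> wdot (-w) (fst s1') + wdot (-w) (fst s2') = 0"
    using weight_step[OF q lp1 lp2 ne1 ne2 fac M0' winj'[unfolded A_def S_def] L'] by blast
  have up1: "\<forall>a. (a, snd s1) \<in> lsupp f1 \<longrightarrow> wdot w a \<le> wdot w (fst s1)"
    and up2: "\<forall>a. (a, snd s2) \<in> lsupp f2 \<longrightarrow> wdot w a \<le> wdot w (fst s2)"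
    and sw0: "wdot w (fst s1) + wdot w (fst s2) = 0" and kk: "snd s1 + snd s2 = card (Wdom q)"
    and rel: "\<forall>x. (\<forall>j. x j \<noteq> 0) \<longrightarrow> f1 s1 * f2 s2 * (zpow x (fst s1) * zpow x (fst s2)) = (-1) ^ card (Wdom q)"
    and mx1: "snd s1 = Max (snd ` lsupp f1)" and mx2: "snd s2 = Max (snd ` lsupp f2)"
    using A1 by blast+
  have fin1: "finite (lsupp f1)" and fin2: "finite (lsupp f2)" using finS unfolding S_def by auto
  have k1: "snd s1' = snd s1" and k2: "snd s2' = snd s2" using A1 A2 by simp_all
  have mn1: "wdot w (fst s1') \<le> wdot w a" if "(a, snd s1) \<in> lsupp f1" for a
    using A2 that k1 by (auto simp: wdot_neg)
  have mn2: "wdot w (fst s2') \<le> wdot w a" if "(a, snd s2) \<in> lsupp f2" for a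
    using A2 that k2 by (auto simp: wdot_neg)
  have s1in: "s1 \<in> lsupp f1" and s2in: "s2 \<in> lsupp f2" using A1 by blast+
  have "(fst s1, snd s1) \<in> lsupp f1" "(fst s2, snd s2) \<in> lsupp f2" using s1in s2in by simp_all
  hence m1: "wdot w (fst s1') \<le> wdot w (fst s1)" and m2: "wdot w (fst s2') \<le> wdot w (fst s2)"
    using mn1 mn2 by blast+
  have sum0: "wdot w (fst s1') + wdot w (fst s2') = 0" using A2 by (simp add: wdot_neg)
  have e1: "wdot w (fst s1') = wdot w (fst s1)" using m1 m2 sum0 sw0 by linarith
  have e2: "wdot w (fst s2') = wdot w (fst s2)" using m1 m2 sum0 sw0 by linarith
  have slice1: "(a, snd s1) \<in> lsupp f1 \<longleftrightarrow> a = fst s1" for a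
  proof
    assume a: "(a, snd s1) \<in> lsupp f1"
    have "wdot w a = wdot w (fst s1)" using mn1[OF a] up1[rule_format, OF a] e1 by linarith
    moreover have "a \<in> A" "fst s1 \<in> A" using a s1in unfolding A_def S_def by force+
    ultimately show "a = fst s1" using winj unfolding inj_on_def by blast
  next
    assume "a = fst s1" thus "(a, snd s1) \<in> lsupp f1" using s1in by simp
  qed
  have slice2: "(a, snd s2) \<in> lsupp f2 \<longleftrightarrow> a = fst s2" for a
  proof
    assume a: "(a, snd s2) \<in> lsupp f2"
    have "wdot w a = wdot w (fst s2)" using mn2[OF a] up2[rule_format, OF a] e2 by linarith
    moreover have "a \<in> A" "fst s2 \<in> A" using a s2in unfolding A_def S_def by force+
    ultimately show "a = fst s2" using winj unfolding inj_on_def by blast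
  next
    assume "a = fst s2" thus "(a, snd s2) \<in> lsupp f2" using s2in by simp
  qed
  have bb: "fst s1 j + fst s2 j = 0" for j
  proof -
    have r1: "f1 s1 * f2 s2 = (-1) ^ card (Wdom q)" using rel[rule_format, of "\<lambda>_. 1"] by (simp add: zpow_one)
    have "f1 s1 * f2 s2 * (zpow (\<lambda>i. if i = j then 2 else 1) (fst s1) * zpow (\<lambda>i. if i = j then 2 else 1) (fst s2))
        = (-1) ^ card (Wdom q)" using rel[rule_format, of "\<lambda>i. if i = j then 2 else 1"] by simp
    hence "(2::complex) powi fst s1 j * 2 powi fst s2 j = 1" using r1 by (simp add: zpow_delta2)
    hence "(2::complex) powi (fst s1 j + fst s2 j) = 1" by (simp add: power_int_add)
    thus ?thesis by (rule two_powi_eq1)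
  qed
  have le1: "\<forall>s\<in>lsupp f1. snd s \<le> snd s1" unfolding mx1 using fin1 by auto
  have le2: "\<forall>s\<in>lsupp f2. snd s \<le> snd s2" unfolding mx2 using fin2 by auto
  show ?thesis
  proof (intro exI conjI)
    show "snd s1 + snd s2 = card (Wdom q)" by (rule kk)
    show "\<forall>j. fst s1 j + fst s2 j = 0" using bb by blast
    show "\<forall>s\<in>lsupp f1. snd s \<le> snd s1" by (rule le1)
    show "\<forall>s\<in>lsupp f2. snd s \<le> snd s2" by (rule le2)
    show "\<forall>a. (a, snd s1) \<in> lsupp f1 \<longleftrightarrow> a = fst s1" using slice1 by blast
    show "\<forall>a. (a, snd s2) \<in> lsupp f2 \<longleftrightarrow> a = fst s2" using slice2 by blast
  qed
qed


lemma prod_limit: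
  fixes f1 f2 :: "('d::finite \<Rightarrow> int) \<times> nat \<Rightarrow> complex"
  assumes lp1: "is_lp f1" and lp2: "is_lp f2" and ne1: "lsupp f1 \<noteq> {}" and ne2: "lsupp f2 \<noteq> {}"
    and fac: "\<forall>z lam. (\<forall>j. z j \<noteq> 0) \<longrightarrow> charP q V z lam = lp_eval f1 z lam * lp_eval f2 z lam"
    and x: "\<forall>j. x j \<noteq> 0"
  shows "((\<lambda>t. charP q V (cz w x t) (cl L \<mu> t) / complex_of_real t powi (emax f1 w L + emax f2 w L))
     \<longlongrightarrow> lp_eval (topc f1 w L) x \<mu> * lp_eval (topc f2 w L) x \<mu>) at_top"
proof -
  have "((\<lambda>t. lp_eval f1 (cz w x t) (cl L \<mu> t) / complex_of_real t powi emax f1 w L *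
        (lp_eval f2 (cz w x t) (cl L \<mu> t) / complex_of_real t powi emax f2 w L))
      \<longlongrightarrow> lp_eval (topc f1 w L) x \<mu> * lp_eval (topc f2 w L) x \<mu>) at_top"
    by (rule tendsto_mult[OF top_limit[OF lp1 ne1] top_limit[OF lp2 ne2]])
  moreover have "eventually (\<lambda>t. lp_eval f1 (cz w x t) (cl L \<mu> t) / complex_of_real t powi emax f1 w L *
        (lp_eval f2 (cz w x t) (cl L \<mu> t) / complex_of_real t powi emax f2 w L)
     = charP q V (cz w x t) (cl L \<mu> t) / complex_of_real t powi (emax f1 w L + emax f2 w L)) at_top"
  proof (rule eventually_mono[OF eventually_gt_at_top[of 0]])
    fix t :: real assume t: "t > 0"
    have nz: "\<forall>j. cz w x t j \<noteq> 0" using t x unfolding cz_def by simp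
    show "lp_eval f1 (cz w x t) (cl L \<mu> t) / complex_of_real t powi emax f1 w L *
        (lp_eval f2 (cz w x t) (cl L \<mu> t) / complex_of_real t powi emax f2 w L)
     = charP q V (cz w x t) (cl L \<mu> t) / complex_of_real t powi (emax f1 w L + emax f2 w L)"
      using fac nz t by (simp add: power_int_add)
  qed
  ultimately show ?thesis by (rule Lim_transform_eventually)
qed

lemma emax_ge:
  assumes "is_lp f" "s \<in> lsupp f"
  shows "wt w L s \<le> emax f w L"
  unfolding emax_def using assms unfolding is_lp_def lsupp_def by (intro Max_ge) auto

lemma topc_ne:
  assumes "is_lp f" "lsupp f \<noteq> {}"
  shows "lsupp (topc f w L) \<noteq> {}"
proof -
  have fin: "finite (lsupp f)" using assms unfolding is_lp_def lsupp_def by simp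
  have "emax f w L \<in> wt w L ` lsupp f" unfolding emax_def using fin assms(2) by (intro Max_in) auto
  then obtain s where "s \<in> lsupp f" "wt w L s = emax f w L" by auto
  hence "s \<in> lsupp (topc f w L)" unfolding lsupp_def topc_def by simp
  thus ?thesis by blast
qed

lemma is_lp_topc: "is_lp f \<Longrightarrow> is_lp (topc f w L)"
  using topc_supp[of f w L] unfolding is_lp_def lsupp_def by (auto intro: finite_subset)

lemma T_step:
  fixes f1 f2 :: "('d::finite \<Rightarrow> int) \<times> nat \<Rightarrow> complex"
  assumes q: "\<forall>j. q j > 0" and lp1: "is_lp f1" and lp2: "is_lp f2"
    and ne1: "lsupp f1 \<noteq> {}" and ne2: "lsupp f2 \<noteq> {}"
    and fac: "\<forall>z lam. (\<forall>j. z j \<noteq> 0) \<longrightarrow> charP q V z lam = lp_eval f1 z lam * lp_eval f2 z lam"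
    and kk: "k1 + k2 = card (Wdom q)" and bb: "\<forall>j. b1 j + b2 j = 0"
    and sl1: "(b1,k1) \<in> lsupp f1" and sl2: "(b2,k2) \<in> lsupp f2"
  shows "(\<forall>x \<mu>. (\<forall>j. x j \<noteq> 0) \<longrightarrow> lp_eval (topc f1 (\<lambda>j. int (q j)) 1) x \<mu> * lp_eval (topc f2 (\<lambda>j. int (q j)) 1) x \<mu>
             = detS (Wdom q) (\<lambda>a b. Alim q x a b - (if a = b then \<mu> else 0)))
     \<and> topc f1 (\<lambda>j. int (q j)) 1 (b1,k1) = f1 (b1,k1) \<and> topc f2 (\<lambda>j. int (q j)) 1 (b2,k2) = f2 (b2,k2)"
proof -
  define wq where "wq = (\<lambda>j. int (q j))"
  define Q where "Q = card (Wdom q)"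
  define E1 where "E1 = emax f1 wq 1"
  define E2 where "E2 = emax f2 wq 1"
  have g1: "wt wq 1 (b1,k1) \<le> E1" unfolding E1_def by (rule emax_ge[OF lp1 sl1])
  have g2: "wt wq 1 (b2,k2) \<le> E2" unfolding E2_def by (rule emax_ge[OF lp2 sl2])
  have bsum: "wdot wq b1 + wdot wq b2 = 0"
  proof -
    have "wdot wq b1 + wdot wq b2 = (\<Sum>j\<in>UNIV. wq j * (b1 j + b2 j))"
      unfolding wdot_def by (simp add: sum.distrib algebra_simps)
    thus ?thesis using bb by simp
  qed
  have wsum: "wt wq 1 (b1,k1) + wt wq 1 (b2,k2) = int Q"
    using bsum kk unfolding wt_def Q_def by simp
  obtain x0 \<mu>0 where x0: "\<forall>j. x0 j \<noteq> 0" and nz: "lp_eval (topc f1 wq 1) x0 \<mu>0 \<noteq> 0" "lp_eval (topc f2 wq 1) x0 \<mu>0 \<noteq> 0"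
    using common_nonzero[OF is_lp_topc[OF lp1] is_lp_topc[OF lp2] topc_ne[OF lp1 ne1] topc_ne[OF lp2 ne2]] by blast
  have limT: "((\<lambda>t. charP q V (cz wq x t) (cl 1 \<mu> t) / complex_of_real t powi int Q)
           \<longlongrightarrow> detS (Wdom q) (\<lambda>a b. Alim q x a b - (if a = b then \<mu> else 0))) at_top" for x \<mu>
    using charP_top[OF q, of V x \<mu>] unfolding wq_def Q_def by simp
  have EE: "E1 + E2 \<le> int Q"
  proof (rule ccontr)
    assume "\<not> E1 + E2 \<le> int Q"
    hence neg: "int Q - (E1 + E2) < 0" by simp
    have l0: "((\<lambda>t. charP q V (cz wq x0 t) (cl 1 \<mu>0 t) / complex_of_real t powi int Q * complex_of_real t powi (int Q - (E1 + E2)))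
       \<longlongrightarrow> detS (Wdom q) (\<lambda>a b. Alim q x0 a b - (if a = b then \<mu>0 else 0)) * 0) at_top"
      by (intro tendsto_mult limT powi_cneg_tendsto neg)
    have ev: "eventually (\<lambda>t. charP q V (cz wq x0 t) (cl 1 \<mu>0 t) / complex_of_real t powi int Q * complex_of_real t powi (int Q - (E1 + E2))
        = charP q V (cz wq x0 t) (cl 1 \<mu>0 t) / complex_of_real t powi (E1 + E2)) at_top"
      by (rule eventually_mono[OF eventually_gt_at_top[of 0]]) (simp add: power_int_diff)
    have "((\<lambda>t. charP q V (cz wq x0 t) (cl 1 \<mu>0 t) / complex_of_real t powi (E1 + E2)) \<longlongrightarrow> 0) at_top"
      using Lim_transform_eventually[OF l0 ev] by simp
    moreover have "((\<lambda>t. charP q V (cz wq x0 t) (cl 1 \<mu>0 t) / complex_of_real t powi (E1 + E2)) \<longlongrightarrow>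
        lp_eval (topc f1 wq 1) x0 \<mu>0 * lp_eval (topc f2 wq 1) x0 \<mu>0) at_top"
      using prod_limit[OF lp1 lp2 ne1 ne2 fac x0] unfolding E1_def E2_def .
    ultimately have "lp_eval (topc f1 wq 1) x0 \<mu>0 * lp_eval (topc f2 wq 1) x0 \<mu>0 = 0"
      using tendsto_unique[OF trivial_limit_at_top_linorder] by blast
    thus False using nz by simp
  qed
  have e1: "E1 = wt wq 1 (b1,k1)" and e2: "E2 = wt wq 1 (b2,k2)" using g1 g2 EE wsum by linarith+
  have rel: "lp_eval (topc f1 wq 1) x \<mu> * lp_eval (topc f2 wq 1) x \<mu> = detS (Wdom q) (\<lambda>a b. Alim q x a b - (if a = b then \<mu> else 0))"
    if x: "\<forall>j. x j \<noteq> 0" for x \<mu>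
  proof -
    have "E1 + E2 = int Q" using e1 e2 wsum by simp
    hence "((\<lambda>t. charP q V (cz wq x t) (cl 1 \<mu> t) / complex_of_real t powi int Q) \<longlongrightarrow>
        lp_eval (topc f1 wq 1) x \<mu> * lp_eval (topc f2 wq 1) x \<mu>) at_top"
      using prod_limit[OF lp1 lp2 ne1 ne2 fac x, of wq 1 \<mu>] unfolding E1_def E2_def by simp
    from tendsto_unique[OF trivial_limit_at_top_linorder this limT] show ?thesis .
  qed
  have t1: "topc f1 wq 1 (b1,k1) = f1 (b1,k1)" using e1 unfolding topc_def E1_def by simp
  have t2: "topc f2 wq 1 (b2,k2) = f2 (b2,k2)" using e2 unfolding topc_def E2_def by simp
  show ?thesis using rel t1 t2 unfolding wq_def by blast
qed


definition lpoly :: "(('d::finite \<Rightarrow> int) \<times> nat \<Rightarrow> complex) \<Rightarrow> ('d \<Rightarrow> complex) \<Rightarrow> complex poly" where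
  "lpoly c x = (\<Sum>s\<in>lsupp c. monom (c s * zpow x (fst s)) (snd s))"

lemma poly_lpoly: "poly (lpoly c x) \<mu> = lp_eval c x \<mu>"
  unfolding lpoly_def lp_eval_def lsupp_def by (simp add: poly_sum poly_monom)

lemma coeff_lpoly: "coeff (lpoly c x) k = (\<Sum>s\<in>lsupp c. if snd s = k then c s * zpow x (fst s) else 0)"
  unfolding lpoly_def coeff_sum coeff_monom by (rule sum.cong) auto

lemma zpow_nz: "\<forall>j. x j \<noteq> 0 \<Longrightarrow> zpow x a \<noteq> 0"
  unfolding zpow_def by simp

lemma root_bound:
  assumes lp: "is_lp c" and le: "\<forall>s\<in>lsupp c. snd s \<le> k" and cb: "c (b,k) \<noteq> 0"
    and sl: "\<forall>a. (a,k) \<in> lsupp c \<longrightarrow> a = b" and x: "\<forall>j. x j \<noteq> 0"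
  shows "finite {\<mu>. lp_eval c x \<mu> = 0} \<and> card {\<mu>. lp_eval c x \<mu> = 0} \<le> k"
proof -
  have fin: "finite (lsupp c)" using lp unfolding is_lp_def lsupp_def .
  have bk: "(b,k) \<in> lsupp c" using cb unfolding lsupp_def by simp
  have "coeff (lpoly c x) k = (\<Sum>s\<in>lsupp c. if s = (b,k) then c (b,k) * zpow x b else 0)"
    unfolding coeff_lpoly
  proof (rule sum.cong[OF refl])
    fix s assume s: "s \<in> lsupp c"
    show "(if snd s = k then c s * zpow x (fst s) else 0) = (if s = (b,k) then c (b,k) * zpow x b else 0)"
    proof (cases "snd s = k")
      case True
      hence "(fst s, k) \<in> lsupp c" using s by (metis prod.collapse)
      hence "fst s = b" using sl by blast
      hence "s = (b,k)" using True by (metis prod.collapse)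
      thus ?thesis by simp
    next
      case False thus ?thesis by auto
    qed
  qed
  also have "\<dots> = c (b,k) * zpow x b" using fin bk by simp
  finally have ck: "coeff (lpoly c x) k = c (b,k) * zpow x b" .
  hence p0: "lpoly c x \<noteq> 0" using cb zpow_nz[OF x, of b] by auto
  have "degree (lpoly c x) \<le> k"
  proof (rule degree_le, intro allI impI)
    fix i assume "k < i"
    thus "coeff (lpoly c x) i = 0" unfolding coeff_lpoly using le by (intro sum.neutral) fastforce
  qed
  moreover have "{\<mu>. lp_eval c x \<mu> = 0} = {\<mu>. poly (lpoly c x) \<mu> = 0}" by (simp add: poly_lpoly)
  ultimately show ?thesis using poly_roots_finite[OF p0] card_poly_roots_bound[OF p0] by simp
qed

lemma count_split:
  assumes finW: "finite W" and inj: "inj_on rr W"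
    and cover: "\<forall>\<zeta>\<in>W. g1 (rr \<zeta>) = 0 \<or> g2 (rr \<zeta>) = 0"
    and b1: "finite {\<mu>. g1 \<mu> = 0}" "card {\<mu>. g1 \<mu> = 0} \<le> k1"
    and b2: "finite {\<mu>. g2 \<mu> = 0}" "card {\<mu>. g2 \<mu> = 0} \<le> k2"
    and cW: "card W = k1 + k2"
  shows "(\<forall>\<zeta>\<in>W. \<not> (g1 (rr \<zeta>) = 0 \<and> g2 (rr \<zeta>) = 0)) \<and> card {\<zeta>\<in>W. g1 (rr \<zeta>) = 0} = k1"
proof -
  define S1 where "S1 = {\<zeta>\<in>W. g1 (rr \<zeta>) = 0}"
  define S2 where "S2 = {\<zeta>\<in>W. g2 (rr \<zeta>) = 0}"
  have f1: "finite S1" "finite S2" unfolding S1_def S2_def using finW by auto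
  have c1: "card S1 \<le> k1"
  proof -
    have "card S1 = card (rr ` S1)" by (rule card_image[symmetric]) (rule inj_on_subset[OF inj], auto simp: S1_def)
    also have "\<dots> \<le> card {\<mu>. g1 \<mu> = 0}" by (rule card_mono[OF b1(1)]) (auto simp: S1_def)
    finally show ?thesis using b1(2) by simp
  qed
  have c2: "card S2 \<le> k2"
  proof -
    have "card S2 = card (rr ` S2)" by (rule card_image[symmetric]) (rule inj_on_subset[OF inj], auto simp: S2_def)
    also have "\<dots> \<le> card {\<mu>. g2 \<mu> = 0}" by (rule card_mono[OF b2(1)]) (auto simp: S2_def)
    finally show ?thesis using b2(2) by simp
  qed
  have U: "S1 \<union> S2 = W" unfolding S1_def S2_def using cover by auto
  have "card (S1 \<union> S2) + card (S1 \<inter> S2) = card S1 + card S2" using card_Un_Int[OF f1] by simp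
  hence "card (S1 \<inter> S2) = 0" and cS1: "card S1 = k1" using U cW c1 c2 by simp_all
  hence "S1 \<inter> S2 = {}" using f1 by simp
  thus ?thesis using cS1 unfolding S1_def S2_def by blast
qed

definition shift :: "('d \<Rightarrow> nat) \<Rightarrow> 'd \<Rightarrow> ('d \<Rightarrow> int) \<Rightarrow> ('d \<Rightarrow> int)" where
  "shift q j \<zeta> = \<zeta>(j := (\<zeta> j + 1) mod int (q j))"

lemma closure_all:
  assumes q: "\<forall>j. q j > 0" and S: "S \<subseteq> Wdom q" and z0: "\<zeta>0 \<in> S"
    and inv: "\<forall>j. \<forall>\<zeta>\<in>S. shift q j \<zeta> \<in> S"
  shows "Wdom q \<subseteq> S"
proof -
  have step: "\<zeta>(j := (\<zeta> j + int n) mod int (q j)) \<in> S" if z: "\<zeta> \<in> S" for \<zeta> j n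
  proof (induction n)
    case 0
    have "0 \<le> \<zeta> j" "\<zeta> j < int (q j)" using S z unfolding Wdom_def by auto
    hence "\<zeta>(j := (\<zeta> j + int 0) mod int (q j)) = \<zeta>" by (simp add: fun_eq_iff)
    thus ?case using z by simp
  next
    case (Suc n)
    have "shift q j (\<zeta>(j := (\<zeta> j + int n) mod int (q j))) = \<zeta>(j := (\<zeta> j + int (Suc n)) mod int (q j))"
    proof -
      have e: "((\<zeta> j + int n) mod int (q j) + 1) mod int (q j) = (\<zeta> j + int (Suc n)) mod int (q j)"
        by (simp only: mod_add_left_eq) (simp add: ac_simps)
      show ?thesis unfolding shift_def using e by (simp add: fun_eq_iff)
    qed
    thus ?case using inv Suc by metis
  qed
  have upd: "\<zeta>(j := m) \<in> S" if z: "\<zeta> \<in> S" and m: "0 \<le> m" "m < int (q j)" for \<zeta> j m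
  proof -
    define n where "n = nat ((m - \<zeta> j) mod int (q j))"
    have qp: "int (q j) > 0" using q by simp
    have "int n = (m - \<zeta> j) mod int (q j)" unfolding n_def using qp by simp
    hence "(\<zeta> j + int n) mod int (q j) = m mod int (q j)" by (simp add: mod_add_right_eq)
    also have "\<dots> = m" using m by simp
    finally show ?thesis using step[OF z, of j n] by simp
  qed
  show ?thesis
  proof
    fix \<eta> assume \<eta>: "\<eta> \<in> Wdom q"
    have "finite J \<Longrightarrow> (\<lambda>j. if j \<in> J then \<eta> j else \<zeta>0 j) \<in> S" for J
    proof (induction J rule: finite_induct)
      case empty thus ?case using z0 by simp
    next
      case (insert i J)
      have "(\<lambda>j. if j \<in> insert i J then \<eta> j else \<zeta>0 j) = (\<lambda>j. if j \<in> J then \<eta> j else \<zeta>0 j)(i := \<eta> i)"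
        by (auto simp: fun_eq_iff)
      moreover have "0 \<le> \<eta> i" "\<eta> i < int (q i)" using \<eta> unfolding Wdom_def by auto
      ultimately show ?case using upd[OF insert.IH] by simp
    qed
    from this[of UNIV] show "\<eta> \<in> S" by simp
  qed
qed


definition ph :: "'d \<Rightarrow> real \<Rightarrow> 'd \<Rightarrow> real" where "ph j0 \<theta> j = (if j = j0 then \<theta> else 0)"
definition rou :: "nat \<Rightarrow> int \<Rightarrow> complex" where
  "rou n a = exp (2 * complex_of_real pi * \<i> * of_int a / of_nat n)"
definition LX :: "('d::finite \<Rightarrow> nat) \<Rightarrow> ('d \<Rightarrow> real) \<Rightarrow> 'd \<Rightarrow> real \<Rightarrow> 'd \<Rightarrow> complex" where
  "LX q \<rho> j0 \<theta> = (\<lambda>j. complex_of_real (\<rho> j ^ q j) * exp (\<i> * complex_of_real (ph j0 \<theta> j)))"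
definition LO :: "('d::finite \<Rightarrow> nat) \<Rightarrow> ('d \<Rightarrow> real) \<Rightarrow> 'd \<Rightarrow> real \<Rightarrow> ('d \<Rightarrow> int) \<Rightarrow> 'd \<Rightarrow> complex" where
  "LO q \<rho> j0 \<theta> \<zeta> j = complex_of_real (\<rho> j) * exp (\<i> * complex_of_real (ph j0 \<theta> j / real (q j))) * rou (q j) (\<zeta> j)"
definition Lr :: "('d::finite \<Rightarrow> nat) \<Rightarrow> ('d \<Rightarrow> real) \<Rightarrow> 'd \<Rightarrow> real \<Rightarrow> ('d \<Rightarrow> int) \<Rightarrow> complex" where
  "Lr q \<rho> j0 \<theta> \<zeta> = - (\<Sum>j\<in>UNIV. LO q \<rho> j0 \<theta> \<zeta> j)"

lemma exp_2pi_int: "exp (2 * complex_of_real pi * \<i> * of_int k) = 1"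
proof -
  have "exp (complex_of_real (2 * real_of_int k * pi) * \<i>) = 1" by (rule exp_integer_2pi) simp
  moreover have "complex_of_real (2 * real_of_int k * pi) * \<i> = 2 * complex_of_real pi * \<i> * of_int k"
    by (simp add: mult_ac)
  ultimately show ?thesis by (simp only:)
qed

lemma exp_2pi_i'': "exp (\<i> * (2 * complex_of_real pi)) = 1"
  by (metis exp_two_pi_i' mult.commute)

lemma rou_int: "n > 0 \<Longrightarrow> rou n (int n * k) = 1"
proof -
  assume n: "n > 0"
  have "2 * complex_of_real pi * \<i> * of_int (int n * k) / of_nat n = 2 * complex_of_real pi * \<i> * of_int k"
    using n by (simp add: field_simps)
  thus ?thesis unfolding rou_def by (simp only: exp_2pi_int)
qed

lemma rou_add: "n > 0 \<Longrightarrow> rou n (a + b) = rou n a * rou n b"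
  unfolding rou_def by (simp add: add_divide_distrib distrib_left distrib_right exp_add)

lemma rou_mod: "n > 0 \<Longrightarrow> rou n a = rou n (a mod int n)"
proof -
  assume n: "n > 0"
  have "a = a mod int n + int n * (a div int n)" by simp
  hence "rou n a = rou n (a mod int n + int n * (a div int n))" by simp
  also have "\<dots> = rou n (a mod int n)" by (subst rou_add[OF n]) (simp add: rou_int[OF n])
  finally show ?thesis .
qed

lemma rou_pow: "n > 0 \<Longrightarrow> rou n a ^ n = 1"
proof -
  assume n: "n > 0"
  have "rou n a ^ n = exp (of_nat n * (2 * complex_of_real pi * \<i> * of_int a / of_nat n))"
    unfolding rou_def exp_of_nat_mult ..
  also have "of_nat n * (2 * complex_of_real pi * \<i> * of_int a / of_nat n) = 2 * complex_of_real pi * \<i> * of_int a"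
    using n by (simp add: field_simps)
  finally show ?thesis by (simp only: exp_2pi_int)
qed

lemma LO_pow:
  assumes "q j > 0"
  shows "LO q \<rho> j0 \<theta> \<zeta> j ^ q j = LX q \<rho> j0 \<theta> j"
proof -
  have e: "exp (\<i> * complex_of_real (ph j0 \<theta> j / real (q j))) ^ q j = exp (\<i> * complex_of_real (ph j0 \<theta> j))"
  proof -
    have "exp (\<i> * complex_of_real (ph j0 \<theta> j / real (q j))) ^ q j =
        exp (of_nat (q j) * (\<i> * complex_of_real (ph j0 \<theta> j / real (q j))))"
      by (rule exp_of_nat_mult[symmetric])
    also have "of_nat (q j) * (\<i> * complex_of_real (ph j0 \<theta> j / real (q j))) = \<i> * complex_of_real (ph j0 \<theta> j)"
      using assms by (simp add: field_simps)
    finally show ?thesis .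
  qed
  have "LO q \<rho> j0 \<theta> \<zeta> j ^ q j = complex_of_real (\<rho> j) ^ q j * exp (\<i> * complex_of_real (ph j0 \<theta> j / real (q j))) ^ q j
     * rou (q j) (\<zeta> j) ^ q j" unfolding LO_def by (simp only: power_mult_distrib)
  also have "\<dots> = complex_of_real (\<rho> j ^ q j) * exp (\<i> * complex_of_real (ph j0 \<theta> j))"
    by (simp only: e rou_pow[OF assms] of_real_power mult_1_right)
  finally show ?thesis unfolding LX_def .
qed

lemma LX_nz: "\<forall>j. \<rho> j > 0 \<Longrightarrow> LX q \<rho> j0 \<theta> j \<noteq> 0"
proof -
  assume "\<forall>j. \<rho> j > 0"
  hence "\<rho> j \<noteq> 0" by (metis less_irrefl)
  thus ?thesis unfolding LX_def by simp
qed

lemma LO_nz: "\<forall>j. \<rho> j > 0 \<Longrightarrow> LO q \<rho> j0 \<theta> \<zeta> j \<noteq> 0"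
proof -
  assume "\<forall>j. \<rho> j > 0"
  hence "\<rho> j \<noteq> 0" by (metis less_irrefl)
  thus ?thesis unfolding LO_def rou_def by simp
qed

lemma loop_eigen:
  assumes q: "\<forall>j. q j > 0" and \<rho>: "\<forall>j. \<rho> j > 0"
  shows "detS (Wdom q) (\<lambda>a b. Alim q (LX q \<rho> j0 \<theta>) a b - (if a = b then Lr q \<rho> j0 \<theta> \<zeta> else 0)) = 0"
proof -
  have h1: "\<forall>j. LO q \<rho> j0 \<theta> \<zeta> j \<noteq> 0" using LO_nz[OF \<rho>] by blast
  have h2: "\<forall>j. LO q \<rho> j0 \<theta> \<zeta> j ^ q j = LX q \<rho> j0 \<theta> j" using LO_pow q by blast
  show ?thesis using eigen_zero[OF q h1 h2] unfolding Lr_def by simp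
qed

lemma LX_2pi: "LX q \<rho> j0 (2 * pi) = LX q \<rho> j0 0"
  unfolding LX_def ph_def by (auto simp: fun_eq_iff exp_2pi_i'')

lemma LO_2pi:
  assumes q: "\<forall>j. q j > 0"
  shows "LO q \<rho> j0 (2 * pi) \<zeta> j = LO q \<rho> j0 0 (shift q j0 \<zeta>) j"
proof (cases "j = j0")
  case True
  have qp: "q j0 > 0" using q by simp
  have "exp (\<i> * complex_of_real (2 * pi / real (q j0))) * rou (q j0) (\<zeta> j0) = rou (q j0) (\<zeta> j0 + 1)"
  proof -
    have "exp (\<i> * complex_of_real (2 * pi / real (q j0))) = rou (q j0) 1"
      unfolding rou_def by (simp add: field_simps)
    thus ?thesis using rou_add[OF qp, of "\<zeta> j0" 1] by (simp add: mult.commute)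
  qed
  also have "\<dots> = rou (q j0) ((\<zeta> j0 + 1) mod int (q j0))" by (rule rou_mod[OF qp])
  finally show ?thesis using True unfolding LO_def ph_def shift_def by (simp add: mult.assoc)
next
  case False thus ?thesis unfolding LO_def ph_def shift_def by simp
qed

lemma Lr_2pi:
  assumes q: "\<forall>j. q j > 0"
  shows "Lr q \<rho> j0 (2 * pi) \<zeta> = Lr q \<rho> j0 0 (shift q j0 \<zeta>)"
  unfolding Lr_def using LO_2pi[OF q] by simp

lemma LX_0: "LX q \<rho> j0 0 = LX q \<rho> j1 0"
  unfolding LX_def ph_def by (simp add: fun_eq_iff)

lemma Lr_0: "Lr q \<rho> j0 0 \<zeta> = Lr q \<rho> j1 0 \<zeta>"
  unfolding Lr_def LO_def ph_def by simp

lemma cont_LX: "continuous_on UNIV (\<lambda>\<theta>. LX q \<rho> j0 \<theta> j)"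
  unfolding LX_def ph_def by (cases "j = j0") (auto intro!: continuous_intros)

lemma cont_Lr: "continuous_on UNIV (\<lambda>\<theta>. Lr q \<rho> j0 \<theta> \<zeta>)"
proof -
  have "continuous_on UNIV (\<lambda>\<theta>. LO q \<rho> j0 \<theta> \<zeta> j)" for j
    unfolding LO_def ph_def by (cases "j = j0") (auto simp: divide_inverse intro!: continuous_intros)
  thus ?thesis unfolding Lr_def by (intro continuous_intros) auto
qed

lemma cont_lp:
  assumes \<rho>: "\<forall>j. \<rho> j > 0"
  shows "continuous_on UNIV (\<lambda>\<theta>. lp_eval c (LX q \<rho> j0 \<theta>) (Lr q \<rho> j0 \<theta> \<zeta>))"
  unfolding lp_eval_def zpow_def
  using LX_nz[OF \<rho>]
  by (intro continuous_intros continuous_on_power_int cont_LX cont_Lr) auto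


lemma sep_sum:
  fixes c :: "'d::finite \<Rightarrow> complex" and idx :: "'d \<Rightarrow> nat"
  assumes idx: "inj idx" and \<delta>: "\<delta> > 0" and R: "R \<ge> 1 + 2 / \<delta>"
    and c: "\<forall>j. c j = 0 \<or> (\<delta> \<le> norm (c j) \<and> norm (c j) \<le> 2)" and nz: "c js \<noteq> 0"
  shows "(\<Sum>j\<in>UNIV. complex_of_real (R ^ idx j) * c j) \<noteq> 0"
proof -
  define J where "J = {j. c j \<noteq> 0}"
  have finJ: "finite J" by simp
  have "js \<in> J" using nz unfolding J_def by simp
  hence neJ: "J \<noteq> {}" by blast
  define m where "m = Max (idx ` J)"
  have "m \<in> idx ` J" unfolding m_def using finJ neJ by (intro Max_in) auto
  then obtain jm where jm: "jm \<in> J" "idx jm = m" by auto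
  have lt: "idx j < m" if "j \<in> J" "j \<noteq> jm" for j
  proof -
    have "idx j \<le> m" unfolding m_def using finJ that by (intro Max_ge) auto
    moreover have "idx j \<noteq> m" using idx that jm unfolding inj_def by metis
    ultimately show ?thesis by simp
  qed
  have Rpos: "R > 1" using R \<delta> by (smt (verit) divide_pos_pos)
  have R1: "2 \<le> \<delta> * (R - 1)" using R \<delta> by (simp add: field_simps)
  define T where "T = (\<Sum>j\<in>UNIV - {jm}. complex_of_real (R ^ idx j) * c j)"
  have split: "(\<Sum>j\<in>UNIV. complex_of_real (R ^ idx j) * c j) = complex_of_real (R ^ m) * c jm + T"
    unfolding T_def using jm(2) by (simp add: sum.remove[of UNIV jm])
  have nT: "norm T \<le> 2 * (\<Sum>i<m. R ^ i)"
  proof -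
    have "norm T \<le> (\<Sum>j\<in>UNIV - {jm}. norm (complex_of_real (R ^ idx j) * c j))"
      unfolding T_def by (rule norm_sum)
    also have "\<dots> = (\<Sum>j\<in>J - {jm}. norm (complex_of_real (R ^ idx j) * c j))"
      by (rule sum.mono_neutral_right) (auto simp: J_def)
    also have "\<dots> \<le> (\<Sum>j\<in>J - {jm}. 2 * R ^ idx j)"
    proof (rule sum_mono)
      fix j assume "j \<in> J - {jm}"
      hence "norm (c j) \<le> 2" using c unfolding J_def by auto
      moreover have "norm (complex_of_real (R ^ idx j) * c j) = R ^ idx j * norm (c j)"
        by (simp only: norm_mult norm_of_real) (use Rpos in simp)
      moreover have "R ^ idx j \<ge> 0" using Rpos by simp
      ultimately show "norm (complex_of_real (R ^ idx j) * c j) \<le> 2 * R ^ idx j"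
        by (simp add: mult.commute mult_right_mono)
    qed
    also have "\<dots> = 2 * (\<Sum>i\<in>idx ` (J - {jm}). R ^ i)"
      by (simp add: sum_distrib_left sum.reindex[OF inj_on_subset[OF idx]])
    also have "\<dots> \<le> 2 * (\<Sum>i<m. R ^ i)"
    proof -
      have "(\<Sum>i\<in>idx ` (J - {jm}). R ^ i) \<le> (\<Sum>i<m. R ^ i)"
        by (rule sum_mono2) (use lt Rpos in auto)
      thus ?thesis by simp
    qed
    finally show ?thesis .
  qed
  have geo: "(R - 1) * (\<Sum>i<m. R ^ i) = R ^ m - 1" using power_diff_1_eq[of R m] by simp
  have sn: "(\<Sum>i<m. R ^ i) \<ge> 0" using Rpos by (intro sum_nonneg) auto
  have "2 * (\<Sum>i<m. R ^ i) \<le> \<delta> * (R - 1) * (\<Sum>i<m. R ^ i)"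
    using R1 sn by (intro mult_right_mono) auto
  also have "\<dots> = \<delta> * (R ^ m - 1)" using geo by (simp add: mult.assoc)
  also have "\<dots> < \<delta> * R ^ m" using \<delta> by simp
  finally have small: "norm T < \<delta> * R ^ m" using nT by linarith
  have big: "norm (complex_of_real (R ^ m) * c jm) \<ge> \<delta> * R ^ m"
  proof -
    have "\<delta> \<le> norm (c jm)" using c jm(1) unfolding J_def by auto
    moreover have "norm (complex_of_real (R ^ m) * c jm) = R ^ m * norm (c jm)"
      by (simp only: norm_mult norm_of_real) (use Rpos in simp)
    moreover have "R ^ m \<ge> 0" using Rpos by simp
    ultimately show ?thesis by (metis mult.commute mult_right_mono)
  qed
  show ?thesis
  proof
    assume "(\<Sum>j\<in>UNIV. complex_of_real (R ^ idx j) * c j) = 0"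
    hence "complex_of_real (R ^ m) * c jm = - T" using split by (simp add: eq_neg_iff_add_eq_0)
    hence "norm (complex_of_real (R ^ m) * c jm) = norm T" by simp
    thus False using small big by simp
  qed
qed

lemma norm_rou: "norm (rou n a) = 1"
  unfolding rou_def by (simp add: norm_exp_eq_Re)

lemma rou_inj:
  assumes n: "n > 0" and a: "0 \<le> a" "a < int n" and b: "0 \<le> b" "b < int n" and e: "rou n a = rou n b"
  shows "a = b"
proof -
  have "rou n a = exp (2 * complex_of_real pi * \<i> * of_nat (nat a) / of_nat n)" unfolding rou_def using a by simp
  moreover have "rou n b = exp (2 * complex_of_real pi * \<i> * of_nat (nat b) / of_nat n)" unfolding rou_def using b by simp
  ultimately have "nat a mod n = nat b mod n" using e complex_root_unity_eq[of n "nat a" "nat b"] n by simp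
  thus ?thesis using a b by (simp add: nat_less_iff)
qed

definition rdelta :: "('d::finite \<Rightarrow> nat) \<Rightarrow> real" where
  "rdelta q = Min (insert 1 ((\<lambda>(j,a,b). norm (rou (q j) a - rou (q j) b)) `
      {(j,a,b). a \<in> {0..<int (q j)} \<and> b \<in> {0..<int (q j)} \<and> a \<noteq> b}))"

lemma rdelta:
  fixes q :: "'d::finite \<Rightarrow> nat"
  assumes q: "\<forall>j. q j > 0"
  shows "rdelta q > 0"
    and "\<And>j a b. a \<in> {0..<int (q j)} \<Longrightarrow> b \<in> {0..<int (q j)} \<Longrightarrow> a \<noteq> b \<Longrightarrow> rdelta q \<le> norm (rou (q j) a - rou (q j) b)"
proof -
  define P where "P = {(j,a,b). a \<in> {0..<int (q j)} \<and> b \<in> {0..<int (q j)} \<and> a \<noteq> b}"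
  have finP: "finite P"
  proof (rule finite_subset)
    show "P \<subseteq> UNIV \<times> {0..<int (Max (range q))} \<times> {0..<int (Max (range q))}"
    proof
      fix x assume "x \<in> P"
      then obtain j a b where x: "x = (j,a,b)" "a \<in> {0..<int (q j)}" "b \<in> {0..<int (q j)}" unfolding P_def by auto
      have "q j \<le> Max (range q)" by (rule Max_ge) auto
      hence iq: "int (q j) \<le> int (Max (range q))" by simp
      have "a < int (q j)" "b < int (q j)" "0 \<le> a" "0 \<le> b" using x(2,3) by auto
      hence "a < int (Max (range q))" "b < int (Max (range q))" "0 \<le> a" "0 \<le> b" using iq by linarith+
      thus "x \<in> UNIV \<times> {0..<int (Max (range q))} \<times> {0..<int (Max (range q))}" using x by auto
    qed
    show "finite ((UNIV :: 'd set) \<times> {0..<int (Max (range q))} \<times> {0..<int (Max (range q))})"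
      by (intro finite_cartesian_product) auto
  qed
  have pos: "\<forall>y\<in>insert 1 ((\<lambda>(j,a,b). norm (rou (q j) a - rou (q j) b)) ` P). y > 0"
  proof
    fix y assume "y \<in> insert 1 ((\<lambda>(j,a,b). norm (rou (q j) a - rou (q j) b)) ` P)"
    then consider "y = 1" | j a b where "(j,a,b) \<in> P" "y = norm (rou (q j) a - rou (q j) b)" by auto
    thus "y > 0"
    proof cases
      case 1 thus ?thesis by simp
    next
      case (2 j a b)
      hence "rou (q j) a \<noteq> rou (q j) b" using rou_inj[of "q j" a b] q unfolding P_def by auto
      thus ?thesis using 2 by simp
    qed
  qed
  show "rdelta q > 0" unfolding rdelta_def P_def[symmetric] using pos finP by (subst Min_gr_iff) auto
  fix j a b assume "a \<in> {0..<int (q j)}" "b \<in> {0..<int (q j)}" "a \<noteq> b"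
  hence "(j,a,b) \<in> P" unfolding P_def by simp
  thus "rdelta q \<le> norm (rou (q j) a - rou (q j) b)" unfolding rdelta_def P_def[symmetric]
    using finP by (intro Min_le) force+
qed

lemma Lr_inj:
  assumes q: "\<forall>j. q j > 0" and idx: "inj idx" and R: "R \<ge> 1 + 2 / rdelta q"
  shows "inj_on (Lr q (\<lambda>j. R ^ idx j) j0 \<theta>) (Wdom q)"
proof (rule inj_onI, rule ccontr)
  fix \<zeta> \<zeta>' assume z: "\<zeta> \<in> Wdom q" "\<zeta>' \<in> Wdom q" and eq: "Lr q (\<lambda>j. R ^ idx j) j0 \<theta> \<zeta> = Lr q (\<lambda>j. R ^ idx j) j0 \<theta> \<zeta>'"
    and ne: "\<zeta> \<noteq> \<zeta>'"
  have \<delta>: "rdelta q > 0" using rdelta(1)[OF q] .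
  define e where "e j = exp (\<i> * complex_of_real (ph j0 \<theta> j / real (q j)))" for j
  define c where "c j = e j * (rou (q j) (\<zeta> j) - rou (q j) (\<zeta>' j))" for j
  have ne1: "norm (e j) = 1" for j unfolding e_def by (rule norm_exp_i_times)
  obtain js where js: "\<zeta> js \<noteq> \<zeta>' js" using ne by (auto simp: fun_eq_iff)
  have cb: "\<forall>j. c j = 0 \<or> (rdelta q \<le> norm (c j) \<and> norm (c j) \<le> 2)"
  proof
    fix j
    show "c j = 0 \<or> (rdelta q \<le> norm (c j) \<and> norm (c j) \<le> 2)"
    proof (cases "\<zeta> j = \<zeta>' j")
      case True thus ?thesis unfolding c_def by simp
    next
      case False
      have r: "\<zeta> j \<in> {0..<int (q j)}" "\<zeta>' j \<in> {0..<int (q j)}" using z unfolding Wdom_def by auto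
      have nc: "norm (c j) = norm (rou (q j) (\<zeta> j) - rou (q j) (\<zeta>' j))" unfolding c_def by (simp add: norm_mult ne1)
      have "norm (rou (q j) (\<zeta> j) - rou (q j) (\<zeta>' j)) \<le> norm (rou (q j) (\<zeta> j)) + norm (rou (q j) (\<zeta>' j))"
        by (rule norm_triangle_ineq4)
      hence "norm (c j) \<le> 2" using nc by (simp add: norm_rou)
      moreover have "rdelta q \<le> norm (c j)" using rdelta(2)[OF q r False] nc by simp
      ultimately show ?thesis by simp
    qed
  qed
  have cjs: "c js \<noteq> 0"
  proof -
    have r: "\<zeta> js \<in> {0..<int (q js)}" "\<zeta>' js \<in> {0..<int (q js)}" using z unfolding Wdom_def by auto
    have "rou (q js) (\<zeta> js) \<noteq> rou (q js) (\<zeta>' js)" using rou_inj[of "q js"] q r js by auto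
    moreover have "e js \<noteq> 0" unfolding e_def by simp
    ultimately show ?thesis unfolding c_def by simp
  qed
  have "(\<Sum>j\<in>UNIV. complex_of_real (R ^ idx j) * c j) \<noteq> 0" by (rule sep_sum[OF idx \<delta> R cb cjs])
  moreover have "(\<Sum>j\<in>UNIV. complex_of_real (R ^ idx j) * c j) =
      (\<Sum>j\<in>UNIV. LO q (\<lambda>j. R ^ idx j) j0 \<theta> \<zeta> j) - (\<Sum>j\<in>UNIV. LO q (\<lambda>j. R ^ idx j) j0 \<theta> \<zeta>' j)"
    unfolding sum_subtractf[symmetric] LO_def c_def e_def by (rule sum.cong) (auto simp: algebra_simps)
  moreover have "(\<Sum>j\<in>UNIV. LO q (\<lambda>j. R ^ idx j) j0 \<theta> \<zeta> j) = (\<Sum>j\<in>UNIV. LO q (\<lambda>j. R ^ idx j) j0 \<theta> \<zeta>' j)"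
    using eq unfolding Lr_def by simp
  ultimately show False by simp
qed


lemma lsupp_empty_eval:
  assumes "lsupp f = {}" shows "lp_eval f z lam = 0"
proof -
  have e: "{x. f x \<noteq> 0} = {}" using assms unfolding lsupp_def .
  show ?thesis unfolding lp_eval_def e by (rule sum.empty)
qed

lemma ne_supp:
  fixes f1 f2 :: "('d::finite \<Rightarrow> int) \<times> nat \<Rightarrow> complex"
  assumes q: "\<forall>j. q j > 0"
    and fac: "\<forall>z lam. (\<forall>j. z j \<noteq> 0) \<longrightarrow> charP q V z lam = lp_eval f1 z lam * lp_eval f2 z lam"
  shows "lsupp f1 \<noteq> {} \<and> lsupp f2 \<noteq> {}"
proof (rule ccontr)
  assume "\<not> (lsupp f1 \<noteq> {} \<and> lsupp f2 \<noteq> {})"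
  hence z: "\<forall>z lam. (\<forall>j. z j \<noteq> 0) \<longrightarrow> charP q V z lam = 0" using fac lsupp_empty_eval by fastforce
  have lim: "((\<lambda>t. charP q V (cz (\<lambda>_. 0) (\<lambda>_. 1) t) (cl 1 1 t) / complex_of_real t powi (1 * int (card (Wdom q))))
     \<longlongrightarrow> (-1) ^ card (Wdom q)) at_top"
    using charP_lam[OF q, of "\<lambda>_. 0" 1 V "\<lambda>_. 1" 1] by simp
  have nzc: "\<forall>j. cz (\<lambda>_. 0) (\<lambda>_. 1) t j \<noteq> 0" for t unfolding cz_def by simp
  have eq0: "(\<lambda>t. charP q V (cz (\<lambda>_. 0) (\<lambda>_. 1) t) (cl 1 1 t) / complex_of_real t powi (1 * int (card (Wdom q)))) = (\<lambda>_. 0)"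
  proof (rule ext)
    fix t
    have "charP q V (cz (\<lambda>_. 0) (\<lambda>_. 1) t) (cl 1 1 t) = 0" using z nzc[of t] by blast
    thus "charP q V (cz (\<lambda>_. 0) (\<lambda>_. 1) t) (cl 1 1 t) / complex_of_real t powi (1 * int (card (Wdom q))) = 0" by simp
  qed
  from lim[unfolded eq0] have "((\<lambda>_::real. 0::complex) \<longlongrightarrow> (-1) ^ card (Wdom q)) at_top" .
  from tendsto_unique[OF trivial_limit_at_top_linorder tendsto_const this]
  have "0 = (-1::complex) ^ card (Wdom q)" .
  thus False by simp
qed

lemma k_pos:
  assumes "\<not> is_monomial f" and le: "\<forall>s\<in>lsupp f. snd s \<le> k" and sl: "\<forall>a. (a,k) \<in> lsupp f \<longleftrightarrow> a = b"
  shows "k \<ge> 1"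
proof (rule ccontr)
  assume "\<not> k \<ge> 1"
  hence k0: "k = 0" by simp
  have supp: "lsupp f = {(b,0)}"
  proof
    show "lsupp f \<subseteq> {(b,0)}"
    proof
      fix s assume s: "s \<in> lsupp f"
      hence "snd s = 0" using le k0 by auto
      hence "(fst s, k) \<in> lsupp f" using s k0 by (metis prod.collapse)
      hence "fst s = b" using sl by blast
      thus "s \<in> {(b,0)}" using \<open>snd s = 0\<close> by (simp add: prod_eq_iff)
    qed
    show "{(b,0)} \<subseteq> lsupp f" using sl k0 by auto
  qed
  hence "f (b,0) \<noteq> 0" unfolding lsupp_def by auto
  moreover have "f = (\<lambda>x. if x = (b,0) then f (b,0) else 0)"
  proof (rule ext)
    fix x
    show "f x = (if x = (b,0) then f (b,0) else 0)"
    proof (cases "x = (b,0)")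
      case True thus ?thesis by simp
    next
      case False
      hence "x \<notin> lsupp f" using supp by blast
      thus ?thesis using False unfolding lsupp_def by simp
    qed
  qed
  ultimately have "is_monomial f" unfolding is_monomial_def by blast
  thus False using assms(1) by simp
qed

lemma shift_in: "\<forall>j. q j > 0 \<Longrightarrow> \<zeta> \<in> Wdom q \<Longrightarrow> shift q j0 \<zeta> \<in> Wdom q"
  unfolding shift_def Wdom_def by auto

theorem mainTheorem6:
  fixes q :: "'d::finite \<Rightarrow> nat" and V :: "('d \<Rightarrow> int) \<Rightarrow> complex"
  assumes "CARD('d) \<ge> 2"
    and "\<forall>j. q j > 0"
    and "Gcd (range q) = 1"
    and "\<forall>n j. V (n(j := n j + int (q j))) = V n"
  shows "\<not> (\<exists>f1 f2. is_lp f1 \<and> is_lp f2 \<and> \<not> is_monomial f1 \<and> \<not> is_monomial f2 \<and>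
            (\<forall>z lam. (\<forall>j. z j \<noteq> 0) \<longrightarrow> charP q V z lam = lp_eval f1 z lam * lp_eval f2 z lam))"
proof
  assume "\<exists>f1 f2. is_lp f1 \<and> is_lp f2 \<and> \<not> is_monomial f1 \<and> \<not> is_monomial f2 \<and>
            (\<forall>z lam. (\<forall>j. z j \<noteq> 0) \<longrightarrow> charP q V z lam = lp_eval f1 z lam * lp_eval f2 z lam)"
  then obtain f1 f2 where lp1: "is_lp f1" and lp2: "is_lp f2" and nm1: "\<not> is_monomial f1" and nm2: "\<not> is_monomial f2"
    and fac: "\<forall>z lam. (\<forall>j. z j \<noteq> 0) \<longrightarrow> charP q V z lam = lp_eval f1 z lam * lp_eval f2 z lam" by blast
  have q: "\<forall>j. q j > 0" using assms(2) .
  define W where "W = Wdom q"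
  have finW: "finite W" unfolding W_def by (rule finite_Wdom)
  have ne1: "lsupp f1 \<noteq> {}" and ne2: "lsupp f2 \<noteq> {}" using ne_supp[OF q fac] by auto
  obtain k1 k2 b1 b2 where kk: "k1 + k2 = card W" and bb: "\<forall>j. b1 j + b2 j = 0"
    and le1: "\<forall>s\<in>lsupp f1. snd s \<le> k1" and le2: "\<forall>s\<in>lsupp f2. snd s \<le> k2"
    and sl1: "\<forall>a. (a,k1) \<in> lsupp f1 \<longleftrightarrow> a = b1" and sl2: "\<forall>a. (a,k2) \<in> lsupp f2 \<longleftrightarrow> a = b2"
    using units_step[OF q lp1 lp2 ne1 ne2 fac] unfolding W_def by blast
  have k1: "k1 \<ge> 1" by (rule k_pos[OF nm1 le1 sl1])
  have k2: "k2 \<ge> 1" by (rule k_pos[OF nm2 le2 sl2])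
  have s1: "(b1,k1) \<in> lsupp f1" and s2: "(b2,k2) \<in> lsupp f2" using sl1 sl2 by auto
  define T1 where "T1 = topc f1 (\<lambda>j. int (q j)) 1"
  define T2 where "T2 = topc f2 (\<lambda>j. int (q j)) 1"
  have Tst: "(\<forall>x \<mu>. (\<forall>j. x j \<noteq> 0) \<longrightarrow> lp_eval T1 x \<mu> * lp_eval T2 x \<mu>
             = detS W (\<lambda>a b. Alim q x a b - (if a = b then \<mu> else 0)))
     \<and> T1 (b1,k1) = f1 (b1,k1) \<and> T2 (b2,k2) = f2 (b2,k2)"
    using T_step[OF q lp1 lp2 ne1 ne2 fac kk[unfolded W_def] bb s1 s2] unfolding T1_def T2_def W_def .
  have rel: "\<And>x \<mu>. \<forall>j. x j \<noteq> 0 \<Longrightarrow> lp_eval T1 x \<mu> * lp_eval T2 x \<mu> = detS W (\<lambda>a b. Alim q x a b - (if a = b then \<mu> else 0))"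
    using Tst by blast
  have lpT1: "is_lp T1" and lpT2: "is_lp T2" unfolding T1_def T2_def using is_lp_topc lp1 lp2 by auto
  have sub1: "lsupp T1 \<subseteq> lsupp f1" and sub2: "lsupp T2 \<subseteq> lsupp f2" unfolding T1_def T2_def by (rule topc_supp)+
  have leT1: "\<forall>s\<in>lsupp T1. snd s \<le> k1" using le1 sub1 by auto
  have leT2: "\<forall>s\<in>lsupp T2. snd s \<le> k2" using le2 sub2 by auto
  have cT1: "T1 (b1,k1) \<noteq> 0" using Tst s1 unfolding lsupp_def by simp
  have cT2: "T2 (b2,k2) \<noteq> 0" using Tst s2 unfolding lsupp_def by simp
  have slT1: "\<forall>a. (a,k1) \<in> lsupp T1 \<longrightarrow> a = b1" using sl1 sub1 by auto
  have slT2: "\<forall>a. (a,k2) \<in> lsupp T2 \<longrightarrow> a = b2" using sl2 sub2 by auto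
  obtain h :: "'d \<Rightarrow> nat" where "bij_betw h UNIV {0..<card (UNIV :: 'd set)}"
    using ex_bij_betw_finite_nat[of "UNIV :: 'd set"] by auto
  hence idx: "inj h" unfolding bij_betw_def by simp
  define R where "R = 1 + 2 / rdelta q"
  have Rpos: "R > 0" unfolding R_def using rdelta(1)[OF q] by (simp add: add_pos_pos)
  define \<rho> where "\<rho> = (\<lambda>j. R ^ h j)"
  have \<rho>: "\<forall>j. \<rho> j > 0" unfolding \<rho>_def using Rpos by simp
  have Rge: "R \<ge> 1 + 2 / rdelta q" unfolding R_def by simp
  have split: "(\<forall>\<zeta>\<in>W. \<not> (lp_eval T1 (LX q \<rho> j0 \<theta>) (Lr q \<rho> j0 \<theta> \<zeta>) = 0 \<and> lp_eval T2 (LX q \<rho> j0 \<theta>) (Lr q \<rho> j0 \<theta> \<zeta>) = 0))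
      \<and> card {\<zeta>\<in>W. lp_eval T1 (LX q \<rho> j0 \<theta>) (Lr q \<rho> j0 \<theta> \<zeta>) = 0} = k1" for j0 \<theta>
  proof -
    let ?x = "LX q \<rho> j0 \<theta>"
    have x: "\<forall>j. ?x j \<noteq> 0" using LX_nz[OF \<rho>] by blast
    have inj: "inj_on (Lr q \<rho> j0 \<theta>) W" unfolding W_def \<rho>_def by (rule Lr_inj[OF q idx Rge])
    have cover: "\<forall>\<zeta>\<in>W. lp_eval T1 ?x (Lr q \<rho> j0 \<theta> \<zeta>) = 0 \<or> lp_eval T2 ?x (Lr q \<rho> j0 \<theta> \<zeta>) = 0"
    proof
      fix \<zeta> assume "\<zeta> \<in> W"
      have "lp_eval T1 ?x (Lr q \<rho> j0 \<theta> \<zeta>) * lp_eval T2 ?x (Lr q \<rho> j0 \<theta> \<zeta>) =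
          detS W (\<lambda>a b. Alim q ?x a b - (if a = b then Lr q \<rho> j0 \<theta> \<zeta> else 0))" by (rule rel[OF x])
      also have "\<dots> = 0" unfolding W_def by (rule loop_eigen[OF q \<rho>])
      finally have "lp_eval T1 ?x (Lr q \<rho> j0 \<theta> \<zeta>) * lp_eval T2 ?x (Lr q \<rho> j0 \<theta> \<zeta>) = 0" .
      thus "lp_eval T1 ?x (Lr q \<rho> j0 \<theta> \<zeta>) = 0 \<or> lp_eval T2 ?x (Lr q \<rho> j0 \<theta> \<zeta>) = 0" by simp
    qed
    have b1: "finite {\<mu>. lp_eval T1 ?x \<mu> = 0} \<and> card {\<mu>. lp_eval T1 ?x \<mu> = 0} \<le> k1"
      by (rule root_bound[OF lpT1 leT1 cT1 slT1 x])
    have b2: "finite {\<mu>. lp_eval T2 ?x \<mu> = 0} \<and> card {\<mu>. lp_eval T2 ?x \<mu> = 0} \<le> k2"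
      by (rule root_bound[OF lpT2 leT2 cT2 slT2 x])
    show ?thesis
      by (rule count_split[OF finW inj cover conjunct1[OF b1] conjunct2[OF b1] conjunct1[OF b2] conjunct2[OF b2] kk[symmetric]])
  qed
  define jj where "jj = (undefined :: 'd)"
  define S0 where "S0 = {\<zeta>\<in>W. lp_eval T1 (LX q \<rho> jj 0) (Lr q \<rho> jj 0 \<zeta>) = 0}"
  have cS0: "card S0 = k1" unfolding S0_def by (rule conjunct2[OF split[of jj 0]])
  have S0W: "S0 \<subseteq> W" unfolding S0_def by auto
  have inv: "\<forall>j0. \<forall>\<zeta>\<in>S0. shift q j0 \<zeta> \<in> S0"
  proof (intro allI ballI)
    fix j0 \<zeta> assume z: "\<zeta> \<in> S0"
    hence zW: "\<zeta> \<in> W" unfolding S0_def by simp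
    define g1 where "g1 \<theta> = lp_eval T1 (LX q \<rho> j0 \<theta>) (Lr q \<rho> j0 \<theta> \<zeta>)" for \<theta>
    define g2 where "g2 \<theta> = lp_eval T2 (LX q \<rho> j0 \<theta>) (Lr q \<rho> j0 \<theta> \<zeta>)" for \<theta>
    have c1: "continuous_on UNIV g1" unfolding g1_def by (rule cont_lp[OF \<rho>])
    have c2: "continuous_on UNIV g2" unfolding g2_def by (rule cont_lp[OF \<rho>])
    have cl1: "closed {\<theta>. g1 \<theta> = 0}" by (rule closed_Collect_eq[OF c1 continuous_on_const])
    have cl2: "closed {\<theta>. g2 \<theta> = 0}" by (rule closed_Collect_eq[OF c2 continuous_on_const])
    have disj: "{\<theta>. g1 \<theta> = 0} \<inter> {\<theta>. g2 \<theta> = 0} \<inter> {0..2*pi} = {}"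
    proof (rule equals0I)
      fix \<theta> assume "\<theta> \<in> {\<theta>. g1 \<theta> = 0} \<inter> {\<theta>. g2 \<theta> = 0} \<inter> {0..2*pi}"
      hence "g1 \<theta> = 0" "g2 \<theta> = 0" by auto
      moreover have "\<not> (g1 \<theta> = 0 \<and> g2 \<theta> = 0)"
        using bspec[OF conjunct1[OF split[of j0 \<theta>]] zW] unfolding g1_def g2_def .
      ultimately show False by simp
    qed
    have cov: "{0..2*pi} \<subseteq> {\<theta>. g1 \<theta> = 0} \<union> {\<theta>. g2 \<theta> = 0}"
    proof
      fix \<theta> :: real
      have x: "\<forall>j. LX q \<rho> j0 \<theta> j \<noteq> 0" using LX_nz[OF \<rho>] by blast
      have "g1 \<theta> * g2 \<theta> = detS W (\<lambda>a b. Alim q (LX q \<rho> j0 \<theta>) a b - (if a = b then Lr q \<rho> j0 \<theta> \<zeta> else 0))"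
        unfolding g1_def g2_def by (rule rel[OF x])
      also have "\<dots> = 0" unfolding W_def by (rule loop_eigen[OF q \<rho>])
      finally have "g1 \<theta> * g2 \<theta> = 0" .
      thus "\<theta> \<in> {\<theta>. g1 \<theta> = 0} \<union> {\<theta>. g2 \<theta> = 0}" by simp
    qed
    have dis: "{\<theta>. g1 \<theta> = 0} \<inter> {0..2*pi} = {} \<or> {\<theta>. g2 \<theta> = 0} \<inter> {0..2*pi} = {}"
      by (rule connected_closedD[OF connected_Icc disj cov cl1 cl2])
    have p0: "(0::real) \<in> {0..2*pi}" and p2: "2*pi \<in> {0..2*pi}" by auto
    have iff: "g1 0 = 0 \<longleftrightarrow> g1 (2*pi) = 0"
    proof (cases "{\<theta>. g1 \<theta> = 0} \<inter> {0..2*pi} = {}")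
      case True
      hence "g1 0 \<noteq> 0" "g1 (2*pi) \<noteq> 0" using p0 p2 by blast+
      thus ?thesis by simp
    next
      case False
      hence B: "{\<theta>. g2 \<theta> = 0} \<inter> {0..2*pi} = {}" using dis by blast
      have "g2 0 \<noteq> 0" "g2 (2*pi) \<noteq> 0" using B p0 p2 by blast+
      moreover have "0 \<in> {\<theta>. g1 \<theta> = 0} \<union> {\<theta>. g2 \<theta> = 0}" "2*pi \<in> {\<theta>. g1 \<theta> = 0} \<union> {\<theta>. g2 \<theta> = 0}"
        using cov p0 p2 by blast+
      ultimately have "g1 0 = 0" "g1 (2*pi) = 0" by auto
      thus ?thesis by simp
    qed
    have "g1 0 = lp_eval T1 (LX q \<rho> jj 0) (Lr q \<rho> jj 0 \<zeta>)" unfolding g1_def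
      LX_0[of q \<rho> j0 jj] Lr_0[of q \<rho> j0 \<zeta> jj] by (rule refl)
    hence "g1 0 = 0" using z unfolding S0_def by simp
    hence "g1 (2*pi) = 0" using iff by simp
    moreover have "g1 (2*pi) = lp_eval T1 (LX q \<rho> jj 0) (Lr q \<rho> jj 0 (shift q j0 \<zeta>))"
      unfolding g1_def LX_2pi[of q \<rho> j0] Lr_2pi[OF q, of \<rho> j0 \<zeta>] LX_0[of q \<rho> j0 jj]
        Lr_0[of q \<rho> j0 "shift q j0 \<zeta>" jj] by (rule refl)
    moreover have "shift q j0 \<zeta> \<in> W" using shift_in[OF q] zW unfolding W_def by blast
    ultimately show "shift q j0 \<zeta> \<in> S0" unfolding S0_def by simp
  qed
  have "S0 \<noteq> {}" using cS0 k1 by auto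
  then obtain \<zeta>0 where "\<zeta>0 \<in> S0" by blast
  have "W \<subseteq> S0" unfolding W_def by (rule closure_all[OF q S0W[unfolded W_def] \<open>\<zeta>0 \<in> S0\<close> inv])
  hence "S0 = W" using S0W by blast
  hence "k1 = card W" using cS0 by simp
  thus False using kk k2 by simp
qed


end
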